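(* Consider the algebraic Riccati operator $$\mathscr R(X)=A^{\mathsf T}XE+E^{\mathsf T}XA+C^{\mathsf T}C-E^{\mathsf T}XBH^{-1}B^{\mathsf T}XE,$$ and let $X_1,\dots,X_n$ ($n\ge2$), with residual factors $R_1,\dots,R_n\in\mathbb{R}^{d\times r}$, inner factor $T$, increments $V_i$ and $\tilde Y_i$ ($i=2,\dots,n$) and shifts $\sigma_1,\dots,\sigma_{n-1}<0$, be generated by the RADI iteration described in the context. Let $\gamma_1,\dots,\gamma_n\in\mathbb{R}$ with $\sum_{i=1}^n\gamma_i=1$ (in particular, the RRE weights), and let $\widehat X=\sum_{i=1}^n\gamma_iX_i$. Then $\operatorname{range}(\mathscr R(\widehat X))\subseteq\operatorname{range}([\,R_1\ R_2\ \cdots\ R_n\,])$, and $$\mathscr R(\widehat X)=[\,R_1\ \cdots\ R_n\,]\,\mathscr H_n\,[\,R_1\ \cdots\ R_n\,]^{\mathsf T},$$ where $\mathscr H_n=\mathscr H_n(\gamma_1,\dots,\gamma_n)$ is the symmetric $nr\times nr$ matrix defined recursively as follows. For $n=2$, $$\mathscr H_2(\gamma_1,\gamma_2)=\begin{bmatrix}\gamma_1^2T+(\gamma_2-\gamma_2^2)\tilde Y_2 & (\gamma_2-\gamma_2^2)(T-\tilde Y_2)\\ (\gamma_2-\gamma_2^2)(T-\tilde Y_2) & \gamma_2^2T+(\gamma_2-\gamma_2^2)\tilde Y_2\end{bmatrix}.$$ For $n\ge3$, $\mathscr H_n=\mathscr A_n+\mathscr B_n+\mathscr C_n$, where $$\mathscr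 A_n=\operatorname{blkdiag}\big(\mathscr H_{n-1}(\gamma_1,\dots,\gamma_{n-2},\gamma_{n-1}+\gamma_n),\ 0_{r\times r}\big),$$ $$\mathscr B_n=\operatorname{blkdiag}\Big(0_{(n-2)r\times(n-2)r},\ \begin{bmatrix}(\gamma_n^2-2\gamma_n)T+(\gamma_n-\gamma_n^2)\tilde Y_n & (\gamma_n-\gamma_n^2)(T-\tilde Y_n)\\ (\gamma_n-\gamma_n^2)(T-\tilde Y_n) & \gamma_n^2T+(\gamma_n-\gamma_n^2)\tilde Y_n\end{bmatrix}\Big),$$ and $\mathscr C_n=\widetilde{\mathscr C}_n+\widetilde{\mathscr C}_n^{\mathsf T}$ with $$\widetilde{\mathscr C}_n=\begin{bmatrix}0_{(n-1)r\times(n-2)r} & M_n^d-M_n^t & M_n^t-M_n^d\\ 0_{r\times(n-2)r} & 0_{r\times r} & 0_{r\times r}\end{bmatrix},$$ where $M_n\in\mathbb{R}^{(n-2)r\times r}$ is the block column whose $i$-th block ($i=2,\dots,n-1$) is $\beta_{ni}\alpha_{in}C_{in}$, $M_n^d=\begin{bmatrix}M_n\\ 0_{r\times r}\end{bmatrix}$, $M_n^t=\begin{bmatrix}0_{r\times r}\\ M_n\end{bmatrix}$, and $$\alpha_{in}=\frac{1}{2\sqrt{\sigma_{i-1}\sigma_{n-1}}},\qquad \beta_{ni}=\gamma_n\sum_{j=1}^{i-1}\gamma_j,\qquad C_{in}=V_i^{\mathsf T}BH^{-1}B^{\mathsf T}V_n\in\mathbb{R}^{r\times r}.$$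
   Context: Data: $A,E\in\mathbb{R}^{d\times d}$, $B\in\mathbb{R}^{d\times p}$, $C\in\mathbb{R}^{q\times d}$, $H\in\mathbb{R}^{p\times p}$ symmetric positive definite. RADI iteration (real shifts): start from $X_1=Z_1D_1Z_1^{\mathsf T}$ with residual $\mathscr R(X_1)=R_1TR_1^{\mathsf T}$, where $R_1\in\mathbb{R}^{d\times r}$ and $T=T^{\mathsf T}\in\mathbb{R}^{r\times r}$ (e.g. $R_1=C^{\mathsf T}$, $T=I$ when $X_1=0$); set $V_1:=Z_1$, $\tilde Y_1^{-1}:=D_1$. For $i=1,2,\dots$, choose $\sigma_i<0$ and set $V_{i+1}=\sqrt{-2\sigma_i}\,(A^{\mathsf T}-E^{\mathsf T}X_iBH^{-1}B^{\mathsf T}+\sigma_iE^{\mathsf T})^{-1}R_iT\in\mathbb{R}^{d\times r}$, $\tilde Y_{i+1}=T-\frac{1}{2\sigma_i}(V_{i+1}^{\mathsf T}B)H^{-1}(V_{i+1}^{\mathsf T}B)^{\mathsf T}$, $\tilde D_{i+1}=\tilde Y_{i+1}^{-1}$, $X_{i+1}=X_i+V_{i+1}\tilde D_{i+1}V_{i+1}^{\mathsf T}$ (so $X_k=\sum_{i=1}^kV_i\tilde Y_i^{-1}V_i^{\mathsf T}$), and $R_{i+1}=R_i+\sqrt{-2\sigma_i}\,E^{\mathsf T}V_{i+1}\tilde D_{i+1}$. All inverses are assumed to exist. Along the iteration $\mathscr R(X_i)=R_iTR_i^{\mathsf T}$ holds with the same inner factor $T$ for all $i$. *)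

theory Defs
  imports "Jordan_Normal_Form.Matrix" "Jordan_Normal_Form.Gauss_Jordan_Elimination"
begin

definition minv :: "real mat \<Rightarrow> real mat" where
  "minv M = the (mat_inverse M)"

definition riccati :: "real mat \<Rightarrow> real mat \<Rightarrow> real mat \<Rightarrow> real mat \<Rightarrow> real mat \<Rightarrow> real mat \<Rightarrow> real mat" where
  "riccati A E B C H X =
     transpose_mat A * X * E + transpose_mat E * X * A + transpose_mat C * C
     - transpose_mat E * X * B * minv H * transpose_mat B * X * E"

definition hcat :: "real mat \<Rightarrow> real mat \<Rightarrow> real mat" where
  "hcat P Q = four_block_mat P Q (0\<^sub>m 0 (dim_col P)) (0\<^sub>m 0 (dim_col Q))"

definition vcat :: "real mat \<Rightarrow> real mat \<Rightarrow> real mat" where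
  "vcat P Q = four_block_mat P (0\<^sub>m (dim_row P) 0) Q (0\<^sub>m (dim_row Q) 0)"

definition blkdiag :: "real mat \<Rightarrow> real mat \<Rightarrow> real mat" where
  "blkdiag P Q = four_block_mat P (0\<^sub>m (dim_row P) (dim_col Q)) (0\<^sub>m (dim_row Q) (dim_col P)) Q"

fun hcats :: "nat \<Rightarrow> (nat \<Rightarrow> real mat) \<Rightarrow> nat \<Rightarrow> real mat" where
  "hcats nr F 0 = 0\<^sub>m nr 0"
| "hcats nr F (Suc k) = hcat (hcats nr F k) (F (Suc k))"

fun vcats :: "nat \<Rightarrow> (nat \<Rightarrow> real mat) \<Rightarrow> nat \<Rightarrow> real mat" where
  "vcats nc F 0 = 0\<^sub>m 0 nc"
| "vcats nc F (Suc k) = vcat (vcats nc F k) (F (Suc k))"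

definition msum :: "nat \<Rightarrow> (nat \<Rightarrow> real mat) \<Rightarrow> nat set \<Rightarrow> real mat" where
  "msum d f I = mat d d (\<lambda>(a,b). \<Sum>i\<in>I. f i $$ (a,b))"

(* Parameters: r (block size), T (inner factor), Y i = \<tilde>Y_i,
   Cc i n = C_{in} = V_i^T B H^-1 B^T V_n, s i = \<sigma>_i, n, g i = \<gamma>_i (1-indexed). *)
fun RHn :: "nat \<Rightarrow> real mat \<Rightarrow> (nat \<Rightarrow> real mat) \<Rightarrow> (nat \<Rightarrow> nat \<Rightarrow> real mat)
             \<Rightarrow> (nat \<Rightarrow> real) \<Rightarrow> nat \<Rightarrow> (nat \<Rightarrow> real) \<Rightarrow> real mat" where
  "RHn r T Y Cc s (Suc (Suc 0)) g =
     (let w = g 2 - (g 2)^2 in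
      four_block_mat ((g 1)^2 \<cdot>\<^sub>m T + w \<cdot>\<^sub>m Y 2) (w \<cdot>\<^sub>m (T - Y 2))
                     (w \<cdot>\<^sub>m (T - Y 2)) ((g 2)^2 \<cdot>\<^sub>m T + w \<cdot>\<^sub>m Y 2))"
| "RHn r T Y Cc s (Suc (Suc (Suc m))) g =
     (let n = Suc (Suc (Suc m));
          An = blkdiag (RHn r T Y Cc s (Suc (Suc m)) (g((n-1) := g (n-1) + g n))) (0\<^sub>m r r);
          w = g n - (g n)^2;
          Bn = blkdiag (0\<^sub>m ((n-2)*r) ((n-2)*r))
                 (four_block_mat (((g n)^2 - 2 * g n) \<cdot>\<^sub>m T + w \<cdot>\<^sub>m Y n) (w \<cdot>\<^sub>m (T - Y n))
                                 (w \<cdot>\<^sub>m (T - Y n)) ((g n)^2 \<cdot>\<^sub>m T + w \<cdot>\<^sub>m Y n));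
          alpha = (\<lambda>i. 1 / (2 * sqrt (s (i-1) * s (n-1))));
          beta = (\<lambda>i. g n * (\<Sum>j=1..i-1. g j));
          Mn = vcats r (\<lambda>k. (beta (k+1) * alpha (k+1)) \<cdot>\<^sub>m Cc (k+1) n) (n-2);
          Md = vcat Mn (0\<^sub>m r r);
          Mt = vcat (0\<^sub>m r r) Mn;
          Ct = vcat (hcat (hcat (0\<^sub>m ((n-1)*r) ((n-2)*r)) (Md - Mt)) (Mt - Md)) (0\<^sub>m r (n*r))
      in An + Bn + (Ct + transpose_mat Ct))"
| "RHn r T Y Cc s _ g = 0\<^sub>m 0 0"

end

theory Submission
  imports Defs "Jordan_Normal_Form.Determinant"
begin

lemma md_add_mult: "dim_row B = dim_row A \<Longrightarrow> dim_col A = dim_row C \<Longrightarrow> dim_col B = dim_row C \<Longrightarrow> (A + B) * C = A * C + B * (C::real mat)"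
  by (rule add_mult_distrib_mat[of _ "dim_row A" "dim_row C" _ _ "dim_col C"]; rule carrier_matI; simp)
lemma md_mult_add: "dim_row B = dim_col A \<Longrightarrow> dim_row C = dim_col A \<Longrightarrow> dim_col B = dim_col C \<Longrightarrow> A * (B + C) = A * B + A * (C::real mat)"
  by (rule mult_add_distrib_mat[of _ "dim_row A" "dim_col A" _ "dim_col C"]; rule carrier_matI; simp)
lemma md_minus_mult: "dim_row B = dim_row A \<Longrightarrow> dim_col A = dim_row C \<Longrightarrow> dim_col B = dim_row C \<Longrightarrow> (A - B) * C = A * C - B * (C::real mat)"
  by (rule minus_mult_distrib_mat[of _ "dim_row A" "dim_row C" _ _ "dim_col C"]; rule carrier_matI; simp)
lemma md_mult_minus: "dim_row B = dim_col A \<Longrightarrow> dim_row C = dim_col A \<Longrightarrow> dim_col B = dim_col C \<Longrightarrow> A * (B - C) = A * B - A * (C::real mat)"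
  by (rule mult_minus_distrib_mat[of _ "dim_row A" "dim_col A" _ "dim_col C"]; rule carrier_matI; simp)
lemma md_assoc: "dim_col A = dim_row B \<Longrightarrow> dim_col B = dim_row C \<Longrightarrow> A * B * C = A * (B * (C::real mat))"
  by (rule assoc_mult_mat[of _ "dim_row A" "dim_col A" _ "dim_col B" _ "dim_col C"]; rule carrier_matI; simp)
lemma md_smult_mult: "dim_col A = dim_row B \<Longrightarrow> (c \<cdot>\<^sub>m A) * B = c \<cdot>\<^sub>m (A * (B::real mat))"
  by (rule eq_matI; simp)
lemma md_mult_smult: "dim_col A = dim_row B \<Longrightarrow> A * (c \<cdot>\<^sub>m B) = c \<cdot>\<^sub>m (A * (B::real mat))"
  by (rule eq_matI; simp)
lemma md_tr_add: "dim_row A = dim_row B \<Longrightarrow> dim_col A = dim_col B \<Longrightarrow> transpose_mat (A + B) = transpose_mat A + transpose_mat (B::real mat)"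
  by (rule eq_matI; simp)
lemma md_tr_minus: "dim_row A = dim_row B \<Longrightarrow> dim_col A = dim_col B \<Longrightarrow> transpose_mat (A - B) = transpose_mat A - transpose_mat (B::real mat)"
  by (rule eq_matI; simp)
lemma md_tr_mult: "dim_col A = dim_row B \<Longrightarrow> transpose_mat (A * B) = transpose_mat B * transpose_mat (A::real mat)"
  by (rule transpose_mult[of _ "dim_row A" "dim_col A" _ "dim_col B"]; rule carrier_matI; simp)
lemma md_tr_smult: "transpose_mat (c \<cdot>\<^sub>m A) = c \<cdot>\<^sub>m transpose_mat (A::real mat)"
  by (rule eq_matI; simp)
lemma md_smult_add: "dim_row A = dim_row B \<Longrightarrow> dim_col A = dim_col B \<Longrightarrow> c \<cdot>\<^sub>m (A + B) = c \<cdot>\<^sub>m A + c \<cdot>\<^sub>m (B::real mat)"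
  by (rule eq_matI; simp add: algebra_simps)
lemma md_smult_minus: "dim_row A = dim_row B \<Longrightarrow> dim_col A = dim_col B \<Longrightarrow> c \<cdot>\<^sub>m (A - B) = c \<cdot>\<^sub>m A - c \<cdot>\<^sub>m (B::real mat)"
  by (rule eq_matI; simp add: algebra_simps)
lemma md_smult_smult: "c \<cdot>\<^sub>m (e \<cdot>\<^sub>m A) = (c * e) \<cdot>\<^sub>m (A::real mat)"
  by (rule eq_matI; simp)
lemmas md_simps = md_smult_add md_smult_minus md_smult_smult md_add_mult md_mult_add md_minus_mult md_mult_minus md_assoc md_smult_mult md_mult_smult md_tr_add md_tr_minus md_tr_mult md_tr_smult
lemmas dimL = index_mult_mat(2,3) index_add_mat(2,3) index_minus_mat(2,3) index_smult_mat(2,3) index_transpose_mat(2,3) index_uminus_mat(2,3)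
lemmas idxL = index_add_mat(1) index_minus_mat(1) index_smult_mat(1) index_uminus_mat(1)


lemma hcat_carrier[simp]: "P \<in> carrier_mat a b \<Longrightarrow> Q \<in> carrier_mat a c \<Longrightarrow> hcat P Q \<in> carrier_mat a (b + c)"
  unfolding hcat_def by (rule carrier_matI) (simp_all)
lemma vcat_carrier[simp]: "P \<in> carrier_mat a c \<Longrightarrow> Q \<in> carrier_mat b c \<Longrightarrow> vcat P Q \<in> carrier_mat (a + b) c"
  unfolding vcat_def by (rule carrier_matI) (simp_all)

lemma hcats_carrier: "(\<And>i. i \<in> {1..k} \<Longrightarrow> F i \<in> carrier_mat nr c) \<Longrightarrow> hcats nr F k \<in> carrier_mat nr (k * c)"
proof (induction k)
  case 0 show ?case by simp
next
  case (Suc k)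
  have "hcats nr F k \<in> carrier_mat nr (k*c)" using Suc by simp
  moreover have "F (Suc k) \<in> carrier_mat nr c" using Suc by simp
  ultimately have "hcat (hcats nr F k) (F (Suc k)) \<in> carrier_mat nr (k*c + c)" by (rule hcat_carrier)
  thus ?case by (simp add: add.commute)
qed

lemma vcats_carrier: "(\<And>i. i \<in> {1..k} \<Longrightarrow> F i \<in> carrier_mat nr c) \<Longrightarrow> vcats c F k \<in> carrier_mat (k * nr) c"
proof (induction k)
  case 0 show ?case by simp
next
  case (Suc k)
  have "vcats c F k \<in> carrier_mat (k*nr) c" using Suc by simp
  moreover have "F (Suc k) \<in> carrier_mat nr c" using Suc by simp
  ultimately have "vcat (vcats c F k) (F (Suc k)) \<in> carrier_mat (k*nr + nr) c" by (rule vcat_carrier)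
  thus ?case by (simp add: add.commute)
qed

lemma hv_mult: assumes "P \<in> carrier_mat a b" "Q \<in> carrier_mat a c" "U \<in> carrier_mat b e" "W \<in> carrier_mat c e"
  shows "hcat P Q * vcat U W = P * U + Q * W"
proof -
  have "hcat P Q * vcat U W = four_block_mat (P * U + Q * W) (P * 0\<^sub>m b 0 + Q * 0\<^sub>m c 0)
     (0\<^sub>m 0 b * U + 0\<^sub>m 0 c * W) (0\<^sub>m 0 b * 0\<^sub>m b 0 + 0\<^sub>m 0 c * 0\<^sub>m c 0)"
    unfolding hcat_def vcat_def using assms
    by (subst mult_four_block_mat[of _ a b _ c _ 0 _ _ e _ 0]) simp_all
  also have "\<dots> = P * U + Q * W"
    using assms by (intro eq_matI) simp_all
  finally show ?thesis .
qed

lemma tr_hcat: assumes "P \<in> carrier_mat a b" "Q \<in> carrier_mat a c"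
  shows "transpose_mat (hcat P Q) = vcat (transpose_mat P) (transpose_mat Q)"
  using assms unfolding hcat_def vcat_def by (intro eq_matI) simp_all

lemma fb_vh: assumes "P11 \<in> carrier_mat a b" "P12 \<in> carrier_mat a c" "P21 \<in> carrier_mat e b" "P22 \<in> carrier_mat e c"
  shows "four_block_mat P11 P12 P21 P22 = vcat (hcat P11 P12) (hcat P21 P22)"
  using assms unfolding hcat_def vcat_def by (intro eq_matI) (simp_all, linarith)

lemma mult_hcat: assumes "M \<in> carrier_mat m a" "P \<in> carrier_mat a b" "Q \<in> carrier_mat a c"
  shows "M * hcat P Q = hcat (M * P) (M * Q)"
proof -
  have "M = four_block_mat M (0\<^sub>m m 0) (0\<^sub>m 0 a) (0\<^sub>m 0 0)"
    using assms by (intro eq_matI) simp_all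
  hence "M * hcat P Q = four_block_mat M (0\<^sub>m m 0) (0\<^sub>m 0 a) (0\<^sub>m 0 0) * hcat P Q" by simp
  also have "\<dots> = four_block_mat (M * P + 0\<^sub>m m 0 * 0\<^sub>m 0 b) (M * Q + 0\<^sub>m m 0 * 0\<^sub>m 0 c)
     (0\<^sub>m 0 a * P + 0\<^sub>m 0 0 * 0\<^sub>m 0 b) (0\<^sub>m 0 a * Q + 0\<^sub>m 0 0 * 0\<^sub>m 0 c)"
    unfolding hcat_def using assms
    by (subst mult_four_block_mat[of _ m a _ 0 _ 0 _ _ b _ c]) simp_all
  also have "\<dots> = hcat (M * P) (M * Q)"
    unfolding hcat_def using assms by (intro eq_matI) simp_all
  finally show ?thesis .
qed

lemma phi_fb: assumes a: "a \<in> carrier_mat d k1" and b: "b \<in> carrier_mat d k2"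
  and P: "P11 \<in> carrier_mat k1 k1" "P12 \<in> carrier_mat k1 k2" "P21 \<in> carrier_mat k2 k1" "P22 \<in> carrier_mat k2 k2"
  shows "hcat a b * four_block_mat P11 P12 P21 P22 * transpose_mat (hcat a b)
    = a * P11 * transpose_mat a + a * P12 * transpose_mat b + b * P21 * transpose_mat a + b * P22 * transpose_mat b"
proof -
  have "hcat a b * four_block_mat P11 P12 P21 P22 = a * hcat P11 P12 + b * hcat P21 P22"
    unfolding fb_vh[OF P] using a b P by (subst hv_mult[of _ d k1 _ k2 _ "k1+k2"]) auto
  also have "\<dots> = hcat (a * P11) (a * P12) + hcat (b * P21) (b * P22)"
    using a b P by (simp add: mult_hcat[of _ d k1 _ k1 _ k2] mult_hcat[of _ d k2 _ k1 _ k2])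
  finally have 1: "hcat a b * four_block_mat P11 P12 P21 P22 = \<dots>" .
  have 2: "transpose_mat (hcat a b) = vcat (transpose_mat a) (transpose_mat b)" using tr_hcat a b by blast
  have c1: "hcat (a * P11) (a * P12) \<in> carrier_mat d (k1+k2)" "hcat (b * P21) (b * P22) \<in> carrier_mat d (k1+k2)"
    using a b P by (auto intro!: hcat_carrier)
  have c2: "vcat (transpose_mat a) (transpose_mat b) \<in> carrier_mat (k1+k2) d" using a b by auto
  show ?thesis unfolding 1 2
    apply (subst add_mult_distrib_mat[OF c1 c2])
    apply (subst hv_mult[of _ d k1 _ k2 _ d], use a b P in auto)+
    done
qed

fun lsum :: "nat \<Rightarrow> nat \<Rightarrow> (nat \<Rightarrow> real mat) \<Rightarrow> nat \<Rightarrow> real mat" where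
  "lsum a b F 0 = 0\<^sub>m a b"
| "lsum a b F (Suc k) = lsum a b F k + F (Suc k)"

lemma lsum_carrier: "(\<And>i. i \<in> {1..k} \<Longrightarrow> F i \<in> carrier_mat a b) \<Longrightarrow> lsum a b F k \<in> carrier_mat a b"
  by (induction k) auto

lemma lsum_index: "(\<And>i. i \<in> {1..k} \<Longrightarrow> F i \<in> carrier_mat a b) \<Longrightarrow> i < a \<Longrightarrow> j < b \<Longrightarrow>
   lsum a b F k $$ (i,j) = (\<Sum>l=1..k. F l $$ (i,j))"
proof (induction k)
  case 0 thus ?case by simp
next
  case (Suc k)
  have c: "F (Suc k) \<in> carrier_mat a b" using Suc by simp
  have "lsum a b F (Suc k) $$ (i,j) = lsum a b F k $$ (i,j) + F (Suc k) $$ (i,j)"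
    unfolding lsum.simps by (rule index_add_mat(1)) (use c Suc.prems in auto)
  also have "\<dots> = (\<Sum>l=1..k. F l $$ (i,j)) + F (Suc k) $$ (i,j)" using Suc by simp
  finally show ?case by simp
qed

lemma lsum_cong: "(\<And>i. i \<in> {1..k} \<Longrightarrow> F i = G i) \<Longrightarrow> lsum a b F k = lsum a b G k"
  by (induction k) auto

lemma lsum_mult_right: assumes "\<And>i. i \<in> {1..k} \<Longrightarrow> F i \<in> carrier_mat a b" "M \<in> carrier_mat b c"
  shows "lsum a b F k * M = lsum a c (\<lambda>i. F i * M) k"
  using assms
proof (induction k)
  case 0 thus ?case by simp
next
  case (Suc k)
  have c: "F (Suc k) \<in> carrier_mat a b" "lsum a b F k \<in> carrier_mat a b" using Suc by (auto intro!: lsum_carrier)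
  show ?case using Suc c by (simp add: add_mult_distrib_mat[of _ a b])
qed

lemma lsum_mult_left: assumes "\<And>i. i \<in> {1..k} \<Longrightarrow> F i \<in> carrier_mat a b" "M \<in> carrier_mat c a"
  shows "M * lsum a b F k = lsum c b (\<lambda>i. M * F i) k"
  using assms
proof (induction k)
  case 0 thus ?case by simp
next
  case (Suc k)
  have c: "F (Suc k) \<in> carrier_mat a b" "lsum a b F k \<in> carrier_mat a b" using Suc by (auto intro!: lsum_carrier)
  show ?case using Suc c by (simp add: mult_add_distrib_mat[of _ c a])
qed

lemma lsum_smult: assumes "\<And>i. i \<in> {1..k} \<Longrightarrow> F i \<in> carrier_mat a b"
  shows "x \<cdot>\<^sub>m lsum a b F k = lsum a b (\<lambda>i. x \<cdot>\<^sub>m F i) k"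
  using assms
proof (induction k)
  case 0 thus ?case by (intro eq_matI) auto
next
  case (Suc k)
  have c: "F (Suc k) \<in> carrier_mat a b" "lsum a b F k \<in> carrier_mat a b" using Suc by (auto intro!: lsum_carrier)
  show ?case using Suc c by (simp add: add_smult_distrib_left_mat[of _ a b])
qed

lemma lsum_minus: assumes "\<And>i. i \<in> {1..k} \<Longrightarrow> F i \<in> carrier_mat a b" "\<And>i. i \<in> {1..k} \<Longrightarrow> G i \<in> carrier_mat a b"
  shows "lsum a b F k - lsum a b G k = lsum a b (\<lambda>i. F i - G i) k"
proof (rule eq_matI)
  fix i j assume ij: "i < dim_row (lsum a b (\<lambda>i. F i - G i) k)" "j < dim_col (lsum a b (\<lambda>i. F i - G i) k)"
  have c: "lsum a b (\<lambda>i. F i - G i) k \<in> carrier_mat a b" using assms by (intro lsum_carrier) (auto intro!: minus_carrier_mat)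
  hence ij': "i < a" "j < b" using ij by auto
  have cF: "lsum a b F k \<in> carrier_mat a b" using assms by (intro lsum_carrier) auto
  have cG: "lsum a b G k \<in> carrier_mat a b" using assms by (intro lsum_carrier) auto
  have "(lsum a b F k - lsum a b G k) $$ (i,j) = lsum a b F k $$ (i,j) - lsum a b G k $$ (i,j)"
    using cG ij' by simp
  also have "\<dots> = (\<Sum>l=1..k. F l $$ (i,j)) - (\<Sum>l=1..k. G l $$ (i,j))"
    using lsum_index[OF assms(1) ij'] lsum_index[OF assms(2) ij'] by simp
  also have "\<dots> = (\<Sum>l=1..k. (F l - G l) $$ (i,j))"
    unfolding sum_subtractf[symmetric]
  proof (rule sum.cong[OF refl])
    fix l assume "l \<in> {1..k}"
    hence "G l \<in> carrier_mat a b" using assms by auto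
    thus "F l $$ (i, j) - G l $$ (i, j) = (F l - G l) $$ (i, j)" using ij' by simp
  qed
  also have "\<dots> = lsum a b (\<lambda>i. F i - G i) k $$ (i,j)"
    using assms ij' by (subst lsum_index) (auto intro!: minus_carrier_mat)
  finally show "(lsum a b F k - lsum a b G k) $$ (i,j) = lsum a b (\<lambda>i. F i - G i) k $$ (i,j)" .
next
  have c: "lsum a b (\<lambda>i. F i - G i) k \<in> carrier_mat a b" using assms by (intro lsum_carrier) (auto intro!: minus_carrier_mat)
  have cG: "lsum a b G k \<in> carrier_mat a b" using assms by (intro lsum_carrier) auto
  show "dim_row (lsum a b F k - lsum a b G k) = dim_row (lsum a b (\<lambda>i. F i - G i) k)"
    "dim_col (lsum a b F k - lsum a b G k) = dim_col (lsum a b (\<lambda>i. F i - G i) k)" using c cG by auto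
qed

lemma vcat_assoc: assumes "P \<in> carrier_mat a c" "Q \<in> carrier_mat b c" "U \<in> carrier_mat e c"
  shows "vcat (vcat P Q) U = vcat P (vcat Q U)"
  using assms unfolding vcat_def by (intro eq_matI) (simp_all, linarith)

lemma hcats_vcats: assumes "\<And>i. i \<in> {1..k} \<Longrightarrow> F i \<in> carrier_mat a b" "\<And>i. i \<in> {1..k} \<Longrightarrow> G i \<in> carrier_mat b c"
  shows "hcats a F k * vcats c G k = lsum a c (\<lambda>i. F i * G i) k"
  using assms
proof (induction k)
  case 0 thus ?case by (intro eq_matI) auto
next
  case (Suc k)
  have cF: "hcats a F k \<in> carrier_mat a (k*b)" using Suc by (intro hcats_carrier) auto
  have cG: "vcats c G k \<in> carrier_mat (k*b) c" using Suc by (intro vcats_carrier) auto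
  have "hcats a F (Suc k) * vcats c G (Suc k) = hcats a F k * vcats c G k + F (Suc k) * G (Suc k)"
    using Suc cF cG by (simp add: hv_mult[of _ a "k*b" _ b _ c])
  thus ?case using Suc by simp
qed

lemma hcats_vcats_shift: assumes "\<And>i. i \<in> {1..Suc k} \<Longrightarrow> F i \<in> carrier_mat a b" "\<And>i. i \<in> {1..k} \<Longrightarrow> G i \<in> carrier_mat b c"
  shows "hcats a F (Suc k) * vcat (0\<^sub>m b c) (vcats c G k) = lsum a c (\<lambda>i. F (Suc i) * G i) k"
  using assms
proof (induction k)
  case 0
  have "hcats a F (Suc 0) * vcat (0\<^sub>m b c) (vcats c G 0) = hcat (0\<^sub>m a 0) (F 1) * vcat (0\<^sub>m 0 c) (0\<^sub>m b c)"
    by (simp add: vcat_def)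
  also have "\<dots> = 0\<^sub>m a 0 * 0\<^sub>m 0 c + F 1 * 0\<^sub>m b c" using 0 by (intro hv_mult) auto
  also have "\<dots> = 0\<^sub>m a c" using 0 by simp
  finally show ?case by simp
next
  case (Suc k)
  have cF: "hcats a F (Suc k) \<in> carrier_mat a (Suc k*b)" using Suc by (intro hcats_carrier) auto
  have cG: "vcats c G k \<in> carrier_mat (k*b) c" using Suc by (intro vcats_carrier) auto
  have G: "G (Suc k) \<in> carrier_mat b c" using Suc by auto
  have "vcat (0\<^sub>m b c) (vcats c G (Suc k)) = vcat (vcat (0\<^sub>m b c) (vcats c G k)) (G (Suc k))"
    using cG G vcat_assoc[of "0\<^sub>m b c" b c "vcats c G k" "k*b" "G (Suc k)" b] by simp
  moreover have "vcat (0\<^sub>m b c) (vcats c G k) \<in> carrier_mat (Suc k * b) c" using cG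
    using vcat_carrier[of "0\<^sub>m b c" b c "vcats c G k" "k*b"] by simp
  ultimately have "hcats a F (Suc (Suc k)) * vcat (0\<^sub>m b c) (vcats c G (Suc k)) =
      hcats a F (Suc k) * vcat (0\<^sub>m b c) (vcats c G k) + F (Suc (Suc k)) * G (Suc k)"
    using Suc cF G by (simp add: hv_mult[of _ a "Suc k*b" _ b _ c])
  thus ?case using Suc by simp
qed

lemma blk_reorg: assumes "Q11 \<in> carrier_mat r r" "Q12 \<in> carrier_mat r r" "Q21 \<in> carrier_mat r r" "Q22 \<in> carrier_mat r r"
  shows "blkdiag (0\<^sub>m N N) (four_block_mat Q11 Q12 Q21 Q22) =
    four_block_mat (blkdiag (0\<^sub>m N N) Q11) (vcat (0\<^sub>m N r) Q12) (hcat (0\<^sub>m r N) Q21) Q22"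
proof (rule eq_matI)
  fix i j assume ij: "i < dim_row (four_block_mat (blkdiag (0\<^sub>m N N) Q11) (vcat (0\<^sub>m N r) Q12) (hcat (0\<^sub>m r N) Q21) Q22)"
    "j < dim_col (four_block_mat (blkdiag (0\<^sub>m N N) Q11) (vcat (0\<^sub>m N r) Q12) (hcat (0\<^sub>m r N) Q21) Q22)"
  hence ij': "i < N + r + r" "j < N + r + r" using assms by (simp_all add: blkdiag_def)
  show "blkdiag (0\<^sub>m N N) (four_block_mat Q11 Q12 Q21 Q22) $$ (i, j) =
    four_block_mat (blkdiag (0\<^sub>m N N) Q11) (vcat (0\<^sub>m N r) Q12) (hcat (0\<^sub>m r N) Q21) Q22 $$ (i, j)"
    using assms ij' unfolding blkdiag_def hcat_def vcat_def
    by (cases "i < N"; cases "i < N + r"; cases "j < N"; cases "j < N + r"; auto)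
qed (use assms in \<open>simp_all add: blkdiag_def hcat_def vcat_def\<close>)
lemma ct_reorg: assumes "P \<in> carrier_mat a b" "Q \<in> carrier_mat a c"
  shows "vcat (hcat P Q) (0\<^sub>m r (b + c)) = four_block_mat P Q (0\<^sub>m r b) (0\<^sub>m r c)"
  using assms unfolding hcat_def vcat_def
  by (intro eq_matI) auto

lemma hcat0: "R \<in> carrier_mat d k \<Longrightarrow> hcat (0\<^sub>m d 0) R = R"
  unfolding hcat_def by (intro eq_matI) auto

lemma dim_hcat[simp]: "dim_row (hcat P Q) = dim_row P" "dim_col (hcat P Q) = dim_col P + dim_col Q"
  unfolding hcat_def by simp_all
lemma dim_vcat[simp]: "dim_row (vcat P Q) = dim_row P + dim_row Q" "dim_col (vcat P Q) = dim_col P"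
  unfolding vcat_def by simp_all
lemma dim_blkdiag[simp]: "dim_row (blkdiag P Q) = dim_row P + dim_row Q" "dim_col (blkdiag P Q) = dim_col P + dim_col Q"
  unfolding blkdiag_def by simp_all

lemma dim_col_vcats[simp]: "dim_col (vcats c F k) = c" by (induction k) auto
lemma dim_row_hcats[simp]: "dim_row (hcats nr F k) = nr" by (induction k) auto

lemma RHn_carrier: assumes "k \<ge> 2" "T \<in> carrier_mat r r" "\<And>i. i \<in> {2..k} \<Longrightarrow> Y i \<in> carrier_mat r r"
  "\<And>i j. i \<in> {2..k} \<Longrightarrow> j \<in> {2..k} \<Longrightarrow> Cc i j \<in> carrier_mat r r"
  shows "RHn r T Y Cc s k g \<in> carrier_mat (k*r) (k*r)"
  using assms
proof (induction k arbitrary: g rule: less_induct)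
  case (less k)
  show ?case
  proof (cases "k = 2")
    case True
    then show ?thesis using less.prems by (simp add: Let_def numeral_2_eq_2)
  next
    case False
    then obtain m where k: "k = Suc (Suc (Suc m))" using less.prems(1)
      by (cases k; cases "k - 1"; cases "k - 2") auto
    define n where "n = Suc (Suc (Suc m))"
    have IH: "RHn r T Y Cc s (Suc (Suc m)) g' \<in> carrier_mat (Suc (Suc m) * r) (Suc (Suc m) * r)" for g'
      using less.prems k by (intro less.IH) auto
    have Yn: "Y n \<in> carrier_mat r r" using less.prems k n_def by auto
    have Mn: "vcats r (\<lambda>k. x k \<cdot>\<^sub>m Cc (k+1) n) (Suc m) \<in> carrier_mat (Suc m * r) r" for x
      using less.prems k n_def by (intro vcats_carrier) auto
    show ?thesis unfolding k RHn.simps(2) Let_def n_def[symmetric]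
      using IH Yn Mn less.prems(2) unfolding n_def
      apply (intro carrier_matI)
      apply (simp_all add: Let_def)
      done
  qed
qed

lemma minv_unit: assumes A: "A \<in> carrier_mat n n" and U: "A \<in> Units (ring_mat TYPE(real) n b)"
  shows "A * minv A = 1\<^sub>m n" "minv A * A = 1\<^sub>m n" "minv A \<in> carrier_mat n n"
proof -
  have "mat_inverse A \<noteq> None"
  proof
    assume "mat_inverse A = None"
    from mat_inverse(1)[OF A this, where b = b] U show False by simp
  qed
  then obtain M where M: "mat_inverse A = Some M" by auto
  from mat_inverse(2)[OF A M] show "A * minv A = 1\<^sub>m n" "minv A * A = 1\<^sub>m n" "minv A \<in> carrier_mat n n"
    unfolding minv_def M by auto
qed

lemma invertible_unit: assumes A: "A \<in> carrier_mat n n" and inv: "invertible_mat A"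
  shows "A \<in> Units (ring_mat TYPE(real) n b)"
proof -
  from inv obtain M where AM: "A * M = 1\<^sub>m (dim_row A)" and MA: "M * A = 1\<^sub>m (dim_row M)"
    unfolding invertible_mat_def inverts_mat_def by auto
  have "dim_col M = n" using AM A by (metis carrier_matD(1) index_mult_mat(3) index_one_mat(3))
  moreover have "dim_row M = n" using MA A by (metis carrier_matD(2) index_mult_mat(3) index_one_mat(3))
  ultimately have Mc: "M \<in> carrier_mat n n" by auto
  show ?thesis unfolding Units_def ring_mat_def using A Mc AM MA by auto
qed

lemma minv_inv: assumes A: "A \<in> carrier_mat n n" and inv: "invertible_mat A"
  shows "A * minv A = 1\<^sub>m n" "minv A * A = 1\<^sub>m n" "minv A \<in> carrier_mat n n"
  using minv_unit[OF A invertible_unit[OF A inv]] by auto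

lemma inv_sym: assumes A: "(A::real mat) \<in> carrier_mat n n" and M: "M \<in> carrier_mat n n"
  and AM: "A * M = 1\<^sub>m n" and MA: "M * A = 1\<^sub>m n" and sym: "transpose_mat A = A"
  shows "transpose_mat M = M"
proof -
  have "transpose_mat M * A = 1\<^sub>m n"
  proof -
    have "transpose_mat M * A = transpose_mat M * transpose_mat A" using sym by simp
    also have "\<dots> = transpose_mat (A * M)" using A M by (simp add: transpose_mult[of A n n M n])
    also have "\<dots> = 1\<^sub>m n" using AM by simp
    finally show ?thesis .
  qed
  have "transpose_mat M = transpose_mat M * (A * M)" using AM M by simp
  also have "\<dots> = (transpose_mat M * A) * M" using A M by (simp add: assoc_mult_mat[of _ n n _ n _ n])
  also have "\<dots> = M" using \<open>transpose_mat M * A = 1\<^sub>m n\<close> M by simp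
  finally show ?thesis .
qed

lemma pd_unit: assumes H: "H \<in> carrier_mat p p"
  and pd: "\<forall>x \<in> carrier_vec p. x \<noteq> 0\<^sub>v p \<longrightarrow> x \<bullet> (H *\<^sub>v x) > (0::real)"
  shows "H \<in> Units (ring_mat TYPE(real) p b)"
proof -
  have "det H \<noteq> 0"
  proof
    assume "det H = 0"
    then obtain v where v: "v \<in> carrier_vec p" "v \<noteq> 0\<^sub>v p" "H *\<^sub>v v = 0\<^sub>v p"
      using det_0_iff_vec_prod_zero[OF H] by auto
    have "v \<bullet> (H *\<^sub>v v) = 0" using v by simp
    with pd v show False by auto
  qed
  thus ?thesis by (rule det_non_zero_imp_unit[OF H])
qed

lemma step_lemma:
  fixes A E B C H Xp Xm V D Y T Rm P :: "real mat"
  assumes A: "A \<in> carrier_mat d d" and E: "E \<in> carrier_mat d d"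
    and B: "B \<in> carrier_mat d p" and C: "C \<in> carrier_mat q d"
    and Hi: "minv H \<in> carrier_mat p p" and Hsym: "transpose_mat (minv H) = minv H"
    and Xp: "Xp \<in> carrier_mat d d" and Xpsym: "transpose_mat Xp = Xp"
    and Xm: "Xm \<in> carrier_mat d d" and Xmsym: "transpose_mat Xm = Xm"
    and V: "V \<in> carrier_mat d r" and D: "D \<in> carrier_mat r r" and Dsym: "transpose_mat D = D"
    and Y: "Y \<in> carrier_mat r r" and T: "T \<in> carrier_mat r r" and Tsym: "transpose_mat T = T"
    and Rm: "Rm \<in> carrier_mat d r"
    and P: "P = transpose_mat E * V * D"
    and hK: "(transpose_mat A - transpose_mat E * Xm * B * minv H * transpose_mat B + \<sigma> \<cdot>\<^sub>m transpose_mat E) * V = s \<cdot>\<^sub>m (Rm * T)"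
    and hVGV: "transpose_mat V * B * minv H * transpose_mat B * V = (2*\<sigma>) \<cdot>\<^sub>m (T - Y)"
    and hYD: "Y * D = 1\<^sub>m r"
    and hss: "s * s = -2*\<sigma>"
  shows "riccati A E B C H (Xp + \<gamma> \<cdot>\<^sub>m (V * D * transpose_mat V))
     = riccati A E B C H Xp + (\<gamma>*s) \<cdot>\<^sub>m (Rm * T * transpose_mat P + P * T * transpose_mat Rm)
       - (2*\<gamma>*\<sigma>) \<cdot>\<^sub>m (P * Y * transpose_mat P) - (2*\<gamma>*\<gamma>*\<sigma>) \<cdot>\<^sub>m (P * (T - Y) * transpose_mat P)
       + \<gamma> \<cdot>\<^sub>m (transpose_mat E * (Xm - Xp) * B * minv H * transpose_mat B * (V * D * transpose_mat V) * E
               + transpose_mat (transpose_mat E * (Xm - Xp) * B * minv H * transpose_mat B * (V * D * transpose_mat V) * E))"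
proof -
  note cars = A E B C Hi Xp Xm V D Y T Rm
  note dims = cars[THEN carrier_matD(1)] cars[THEN carrier_matD(2)]
  have ka: "transpose_mat A * (V * Z) = s \<cdot>\<^sub>m (Rm * (T * Z)) + transpose_mat E * (Xm * (B * (minv H * (transpose_mat B * (V * Z))))) - \<sigma> \<cdot>\<^sub>m (transpose_mat E * (V * Z))"
    if Z: "dim_row Z = r" for Z
  proof -
    from hK have h: "(transpose_mat A - transpose_mat E * Xm * B * minv H * transpose_mat B + \<sigma> \<cdot>\<^sub>m transpose_mat E) * V * Z = s \<cdot>\<^sub>m (Rm * T) * Z" by simp
    have h2: "(transpose_mat A * (V * Z) - transpose_mat E * (Xm * (B * (minv H * (transpose_mat B * (V * Z))))) + \<sigma> \<cdot>\<^sub>m (transpose_mat E * (V * Z))) = s \<cdot>\<^sub>m (Rm * (T * Z))"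
      using h by (simp only: md_simps dimL dims Z simp_thms)
    show ?thesis
      apply (rule eq_matI)
      subgoal for i j using arg_cong[OF h2, of "\<lambda>M. M $$ (i,j)"]
        by (simp only: idxL dimL dims Z; linarith)
      by (simp_all only: dimL dims Z)
  qed
  have kb: "transpose_mat V * A = s \<cdot>\<^sub>m (T * transpose_mat Rm) + transpose_mat V * (B * (minv H * (transpose_mat B * (Xm * E)))) - \<sigma> \<cdot>\<^sub>m (transpose_mat V * E)"
  proof -
    from hK have h: "transpose_mat ((transpose_mat A - transpose_mat E * Xm * B * minv H * transpose_mat B + \<sigma> \<cdot>\<^sub>m transpose_mat E) * V) = transpose_mat (s \<cdot>\<^sub>m (Rm * T))" by simp
    have h2: "transpose_mat V * A - transpose_mat V * (B * (minv H * (transpose_mat B * (Xm * E)))) + \<sigma> \<cdot>\<^sub>m (transpose_mat V * E) = s \<cdot>\<^sub>m (T * transpose_mat Rm)"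
      using h by (simp only: md_simps dimL dims simp_thms transpose_transpose Hsym Xmsym Tsym)
    show ?thesis
      apply (rule eq_matI)
      subgoal for i j using arg_cong[OF h2, of "\<lambda>M. M $$ (i,j)"]
        by (simp only: idxL dimL dims; linarith)
      by (simp_all only: dimL dims)
  qed
  have vgv: "transpose_mat V * (B * (minv H * (transpose_mat B * (V * Z)))) = (2*\<sigma>) \<cdot>\<^sub>m (T * Z) - (2*\<sigma>) \<cdot>\<^sub>m (Y * Z)"
    if Z: "dim_row Z = r" for Z
  proof -
    from hVGV have h: "transpose_mat V * B * minv H * transpose_mat B * V * Z = (2*\<sigma>) \<cdot>\<^sub>m (T - Y) * Z" by simp
    show ?thesis using h by (simp only: md_simps dimL dims Z simp_thms)
  qed
  have dyd: "D * (Y * (D * Z)) = D * Z" if Z: "dim_row Z = r" for Z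
  proof -
    have "D * (Y * (D * Z)) = D * (Y * D) * Z" by (simp only: md_simps dimL dims Z simp_thms)
    also have "\<dots> = D * Z" using D by (simp add: hYD)
    finally show ?thesis .
  qed
  have sig: "\<sigma> = - (s*s)/2" using hss by simp
  show ?thesis
    unfolding riccati_def P
    apply (simp only: md_simps dimL dims simp_thms transpose_transpose Hsym Xmsym Tsym Xpsym Dsym)
    apply (simp only: ka kb vgv dyd dimL dims simp_thms)
    apply (simp only: md_simps dyd dimL dims simp_thms transpose_transpose Hsym Xmsym Tsym Xpsym Dsym)
    apply (rule eq_matI)
     apply (simp_all only: idxL dimL dims sig)
    done
qed

lemma phi_An: assumes a: "a \<in> carrier_mat d N" and Rn: "Rn \<in> carrier_mat d r" and M: "M \<in> carrier_mat N N"
  shows "hcat a Rn * blkdiag M (0\<^sub>m r r) * transpose_mat (hcat a Rn) = a * M * transpose_mat a"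
proof -
  have "hcat a Rn * blkdiag M (0\<^sub>m r r) * transpose_mat (hcat a Rn) =
    a * M * transpose_mat a + a * 0\<^sub>m N r * transpose_mat Rn + Rn * 0\<^sub>m r N * transpose_mat a + Rn * 0\<^sub>m r r * transpose_mat Rn"
    using M by (simp only: blkdiag_def carrier_matD index_zero_mat, intro phi_fb[OF a Rn]) auto
  also have "\<dots> = a * M * transpose_mat a" using a Rn M by simp
  finally show ?thesis .
qed

lemma phi_Bn: assumes a: "a \<in> carrier_mat d N" and Rm: "Rm \<in> carrier_mat d r" and Rn: "Rn \<in> carrier_mat d r"
  and Q: "Q11 \<in> carrier_mat r r" "Q12 \<in> carrier_mat r r" "Q21 \<in> carrier_mat r r" "Q22 \<in> carrier_mat r r"
  shows "hcat (hcat a Rm) Rn * blkdiag (0\<^sub>m N N) (four_block_mat Q11 Q12 Q21 Q22) * transpose_mat (hcat (hcat a Rm) Rn)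
    = Rm * Q11 * transpose_mat Rm + Rm * Q12 * transpose_mat Rn + Rn * Q21 * transpose_mat Rm + Rn * Q22 * transpose_mat Rn"
proof -
  have am: "hcat a Rm \<in> carrier_mat d (N + r)" using a Rm by auto
  have c1: "blkdiag (0\<^sub>m N N) Q11 \<in> carrier_mat (N + r) (N + r)" using Q unfolding blkdiag_def by auto
  have c2: "vcat (0\<^sub>m N r) Q12 \<in> carrier_mat (N + r) r" using Q by auto
  have c3: "hcat (0\<^sub>m r N) Q21 \<in> carrier_mat r (N + r)" using Q by auto
  have 1: "hcat (hcat a Rm) Rn * blkdiag (0\<^sub>m N N) (four_block_mat Q11 Q12 Q21 Q22) * transpose_mat (hcat (hcat a Rm) Rn)
    = hcat a Rm * blkdiag (0\<^sub>m N N) Q11 * transpose_mat (hcat a Rm) + hcat a Rm * vcat (0\<^sub>m N r) Q12 * transpose_mat Rn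
      + Rn * hcat (0\<^sub>m r N) Q21 * transpose_mat (hcat a Rm) + Rn * Q22 * transpose_mat Rn"
    unfolding blk_reorg[OF Q] by (rule phi_fb[OF am Rn c1 c2 c3 Q(4)])
  have 2: "hcat a Rm * blkdiag (0\<^sub>m N N) Q11 * transpose_mat (hcat a Rm) = Rm * Q11 * transpose_mat Rm"
  proof -
    have "hcat a Rm * blkdiag (0\<^sub>m N N) Q11 * transpose_mat (hcat a Rm) =
      a * 0\<^sub>m N N * transpose_mat a + a * 0\<^sub>m N r * transpose_mat Rm + Rm * 0\<^sub>m r N * transpose_mat a + Rm * Q11 * transpose_mat Rm"
      using Q by (simp only: blkdiag_def carrier_matD index_zero_mat, intro phi_fb[OF a Rm]) auto
    also have "\<dots> = Rm * Q11 * transpose_mat Rm" using a Rm Q by simp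
    finally show ?thesis .
  qed
  have 3: "hcat a Rm * vcat (0\<^sub>m N r) Q12 = Rm * Q12"
    using a Rm Q by (subst hv_mult[OF a Rm, of _ r]) auto
  have 4: "hcat (0\<^sub>m r N) Q21 * transpose_mat (hcat a Rm) = Q21 * transpose_mat Rm"
    unfolding tr_hcat[OF a Rm] using a Rm Q by (subst hv_mult[of _ r N _ r _ d]) auto
  have 5: "Rn * hcat (0\<^sub>m r N) Q21 * transpose_mat (hcat a Rm) = Rn * Q21 * transpose_mat Rm"
    using 4 Rn Q a Rm by (subst assoc_mult_mat[of _ d r _ "N + r" _ d]) auto
  show ?thesis unfolding 1 2 3 5 by simp
qed

lemma phi_Ct: assumes a: "a \<in> carrier_mat d N" and Rm: "Rm \<in> carrier_mat d r" and Rn: "Rn \<in> carrier_mat d r"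
  and U1: "U1 \<in> carrier_mat (N + r) r" and U2: "U2 \<in> carrier_mat (N + r) r"
  shows "hcat (hcat a Rm) Rn * vcat (hcat (hcat (0\<^sub>m (N + r) N) U1) U2) (0\<^sub>m r (N + r + r)) * transpose_mat (hcat (hcat a Rm) Rn)
    = hcat a Rm * U1 * transpose_mat Rm + hcat a Rm * U2 * transpose_mat Rn"
proof -
  have am: "hcat a Rm \<in> carrier_mat d (N + r)" using a Rm by auto
  have h0: "hcat (0\<^sub>m (N + r) N) U1 \<in> carrier_mat (N + r) (N + r)" using U1 by auto
  have 1: "hcat (hcat a Rm) Rn * vcat (hcat (hcat (0\<^sub>m (N + r) N) U1) U2) (0\<^sub>m r (N + r + r)) * transpose_mat (hcat (hcat a Rm) Rn)
    = hcat a Rm * hcat (0\<^sub>m (N + r) N) U1 * transpose_mat (hcat a Rm) + hcat a Rm * U2 * transpose_mat Rn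
      + Rn * 0\<^sub>m r (N + r) * transpose_mat (hcat a Rm) + Rn * 0\<^sub>m r r * transpose_mat Rn"
    unfolding ct_reorg[OF h0 U2] by (rule phi_fb[OF am Rn h0 U2]) auto
  have 4: "hcat (0\<^sub>m (N + r) N) U1 * transpose_mat (hcat a Rm) = U1 * transpose_mat Rm"
    unfolding tr_hcat[OF a Rm] using a Rm U1 by (subst hv_mult[of _ "N + r" N _ r _ d]) auto
  have 5: "hcat a Rm * hcat (0\<^sub>m (N + r) N) U1 * transpose_mat (hcat a Rm) = hcat a Rm * U1 * transpose_mat Rm"
    using 4 am U1 Rm by (subst assoc_mult_mat[of _ d "N + r" _ "N + r" _ d]) auto
  have z2: "Rn * 0\<^sub>m r (N + r) * transpose_mat (hcat a Rm) = 0\<^sub>m d d"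
    using am Rn a Rm by (subst assoc_mult_mat[of _ d r _ "N + r" _ d]) auto
  have c: "hcat a Rm * U1 * transpose_mat Rm + hcat a Rm * U2 * transpose_mat Rn \<in> carrier_mat d d"
    using am Rn Rm U1 U2 by auto
  show ?thesis unfolding 1 5 z2 using c Rn by simp
qed

lemma bn_alg: assumes Rm: "Rm \<in> carrier_mat d r" and P: "P \<in> carrier_mat d r"
  and T: "T \<in> carrier_mat r r" and Y: "Y \<in> carrier_mat r r"
  and x: "(x::real) = \<gamma>^2 - 2*\<gamma> + c0" and w: "w = \<gamma> - \<gamma>^2" and hss: "s * s = -2 * \<sigma>"
  shows "Rm * (x \<cdot>\<^sub>m T + w \<cdot>\<^sub>m Y) * transpose_mat Rm + Rm * (w \<cdot>\<^sub>m (T - Y)) * transpose_mat (Rm + s \<cdot>\<^sub>m P)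
     + (Rm + s \<cdot>\<^sub>m P) * (w \<cdot>\<^sub>m (T - Y)) * transpose_mat Rm
     + (Rm + s \<cdot>\<^sub>m P) * (\<gamma>^2 \<cdot>\<^sub>m T + w \<cdot>\<^sub>m Y) * transpose_mat (Rm + s \<cdot>\<^sub>m P)
   = c0 \<cdot>\<^sub>m (Rm * T * transpose_mat Rm) + (\<gamma>*s) \<cdot>\<^sub>m (Rm * T * transpose_mat P + P * T * transpose_mat Rm)
       - (2*\<gamma>*\<sigma>) \<cdot>\<^sub>m (P * Y * transpose_mat P) - (2*\<gamma>*\<gamma>*\<sigma>) \<cdot>\<^sub>m (P * (T - Y) * transpose_mat P)"
proof -
  note cars = Rm P T Y
  note dims = cars[THEN carrier_matD(1)] cars[THEN carrier_matD(2)]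
  have sig: "\<sigma> = - (s*s)/2" using hss by simp
  show ?thesis unfolding x w
    apply (simp only: md_simps dimL dims simp_thms transpose_transpose)
    apply (rule eq_matI)
     apply (simp_all only: idxL dimL dims sig)
    apply (simp add: algebra_simps power2_eq_square)
    done
qed

lemma RHn_step:
  fixes k N r :: nat and Mn Ct T :: "real mat" and g \<sigma> :: "nat \<Rightarrow> real" and Y :: "nat \<Rightarrow> real mat" and Cc :: "nat \<Rightarrow> nat \<Rightarrow> real mat"
  assumes N_def: "N = Suc (Suc (Suc k))"
  assumes Mn_def: "Mn = vcats r (\<lambda>i. (g N * sum g {1..i} * (1 / (2 * sqrt (\<sigma> i * \<sigma> (Suc (Suc k)))))) \<cdot>\<^sub>m Cc (Suc i) N) (Suc k)"
  assumes Ct_def: "Ct = vcat (hcat (hcat (0\<^sub>m (Suc (Suc k) * r) (Suc k * r)) (vcat Mn (0\<^sub>m r r) - vcat (0\<^sub>m r r) Mn))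
                (vcat (0\<^sub>m r r) Mn - vcat Mn (0\<^sub>m r r))) (0\<^sub>m r (N * r))"
  shows "RHn r T Y Cc \<sigma> N g =
    blkdiag (RHn r T Y Cc \<sigma> (Suc (Suc k)) (g(Suc (Suc k) := g (Suc (Suc k)) + g N))) (0\<^sub>m r r)
    + blkdiag (0\<^sub>m (Suc k * r) (Suc k * r))
        (four_block_mat (((g N)^2 - 2 * g N) \<cdot>\<^sub>m T + (g N - (g N)^2) \<cdot>\<^sub>m Y N) ((g N - (g N)^2) \<cdot>\<^sub>m (T - Y N))
                        ((g N - (g N)^2) \<cdot>\<^sub>m (T - Y N)) ((g N)^2 \<cdot>\<^sub>m T + (g N - (g N)^2) \<cdot>\<^sub>m Y N))
    + (Ct + transpose_mat Ct)"
  unfolding N_def Mn_def Ct_def by (simp add: Let_def)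

lemma phi_sum: assumes hc: "(hc::real mat) \<in> carrier_mat d N" and M: "M1 \<in> carrier_mat N N" "M2 \<in> carrier_mat N N" "M3 \<in> carrier_mat N N"
  shows "hc * (M1 + M2 + (M3 + transpose_mat M3)) * transpose_mat hc =
    hc * M1 * transpose_mat hc + hc * M2 * transpose_mat hc + hc * M3 * transpose_mat hc + transpose_mat (hc * M3 * transpose_mat hc)"
proof -
  note cars = hc M
  note dims = cars[THEN carrier_matD(1)] cars[THEN carrier_matD(2)]
  show ?thesis
    apply (simp only: md_simps dimL dims simp_thms transpose_transpose)
    apply (rule eq_matI)
     apply (simp_all only: idxL dimL dims)
    done
qed

lemma lsum_sandwich: assumes F: "\<And>i. i \<in> {1..k} \<Longrightarrow> F i \<in> carrier_mat a b" and L: "L \<in> carrier_mat c a" and M: "M \<in> carrier_mat b e"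
  shows "L * lsum a b F k * M = lsum c e (\<lambda>i. L * F i * M) k"
proof -
  have "L * lsum a b F k = lsum c b (\<lambda>i. L * F i) k" by (rule lsum_mult_left[OF F L])
  moreover have "lsum c b (\<lambda>i. L * F i) k * M = lsum c e (\<lambda>i. L * F i * M) k"
    by (rule lsum_mult_right) (use F L M in auto)
  ultimately show ?thesis by simp
qed

lemma sqrt_prod: assumes "a < 0" "b < (0::real)"
  shows "sqrt (- 2 * a) * sqrt (- 2 * b) = 2 * sqrt (a * b)"
proof -
  have "sqrt (- 2 * a) * sqrt (- 2 * b) = sqrt (4 * (a * b))" by (simp add: real_sqrt_mult[symmetric] algebra_simps)
  also have "\<dots> = 2 * sqrt (a * b)" by (simp add: real_sqrt_mult)
  finally show ?thesis .
qed

locale radi =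
  fixes A E B C H T :: "real mat" and d p q r n :: nat
    and X R V Yt :: "nat \<Rightarrow> real mat" and \<sigma> :: "nat \<Rightarrow> real"
  assumes A: "A \<in> carrier_mat d d" and E: "E \<in> carrier_mat d d"
    and B: "B \<in> carrier_mat d p" and C: "C \<in> carrier_mat q d"
    and H: "H \<in> carrier_mat p p" and H_sym: "transpose_mat H = H"
    and H_pd: "\<forall>x \<in> carrier_vec p. x \<noteq> 0\<^sub>v p \<longrightarrow> x \<bullet> (H *\<^sub>v x) > 0"
    and T: "T \<in> carrier_mat r r" and T_sym: "transpose_mat T = T"
    and X1: "\<exists>k Z1 D1. Z1 \<in> carrier_mat d k \<and> D1 \<in> carrier_mat k k \<and> transpose_mat D1 = D1
               \<and> X 1 = Z1 * D1 * transpose_mat Z1"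
    and R1: "R 1 \<in> carrier_mat d r"
    and res1: "riccati A E B C H (X 1) = R 1 * T * transpose_mat (R 1)"
    and n: "n \<ge> 2"
    and shifts: "\<forall>i\<in>{1..<n}. \<sigma> i < 0"
    and K_inv: "\<forall>i\<in>{1..<n}. invertible_mat
                  (transpose_mat A - transpose_mat E * X i * B * minv H * transpose_mat B
                   + \<sigma> i \<cdot>\<^sub>m transpose_mat E)"
    and V_def: "\<forall>i\<in>{1..<n}. V (Suc i) = sqrt (- 2 * \<sigma> i) \<cdot>\<^sub>m
                  (minv (transpose_mat A - transpose_mat E * X i * B * minv H * transpose_mat B
                         + \<sigma> i \<cdot>\<^sub>m transpose_mat E) * R i * T)"
    and Y_def: "\<forall>i\<in>{1..<n}. Yt (Suc i) = T - (1 / (2 * \<sigma> i)) \<cdot>\<^sub>m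
                  ((transpose_mat (V (Suc i)) * B) * minv H * transpose_mat (transpose_mat (V (Suc i)) * B))"
    and Y_inv: "\<forall>i\<in>{1..<n}. invertible_mat (Yt (Suc i))"
    and X_def: "\<forall>i\<in>{1..<n}. X (Suc i) = X i + V (Suc i) * minv (Yt (Suc i)) * transpose_mat (V (Suc i))"
    and R_def: "\<forall>i\<in>{1..<n}. R (Suc i) = R i + sqrt (- 2 * \<sigma> i) \<cdot>\<^sub>m
                  (transpose_mat E * V (Suc i) * minv (Yt (Suc i)))"
begin

definition K where "K i = transpose_mat A - transpose_mat E * X i * B * minv H * transpose_mat B + \<sigma> i \<cdot>\<^sub>m transpose_mat E"

lemma Hi: "minv H \<in> carrier_mat p p" "transpose_mat (minv H) = minv H"
proof -
  note U = minv_unit[OF H pd_unit[OF H H_pd, where b = "()"]]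
  show "minv H \<in> carrier_mat p p" using U by auto
  show "transpose_mat (minv H) = minv H" using inv_sym[OF H U(3) U(1) U(2) H_sym] .
qed

lemma X1_props: "X 1 \<in> carrier_mat d d" "transpose_mat (X 1) = X 1"
proof -
  obtain k Z1 D1 where Z: "Z1 \<in> carrier_mat d k" "D1 \<in> carrier_mat k k" "transpose_mat D1 = D1"
    "X 1 = Z1 * D1 * transpose_mat Z1" using X1 by blast
  show "X 1 \<in> carrier_mat d d" using Z by auto
  note dims = Z(1,2)[THEN carrier_matD(1)] Z(1,2)[THEN carrier_matD(2)]
  show "transpose_mat (X 1) = X 1" unfolding Z(4)
    by (simp only: md_simps dimL dims simp_thms transpose_transpose Z(3))
qed

lemma step_facts:
  assumes i: "i \<in> {1..<n}" and Xi: "X i \<in> carrier_mat d d" "transpose_mat (X i) = X i"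
    and Ri: "R i \<in> carrier_mat d r"
  shows "K i \<in> carrier_mat d d" "K i * minv (K i) = 1\<^sub>m d" "minv (K i) \<in> carrier_mat d d"
    "V (Suc i) \<in> carrier_mat d r" "Yt (Suc i) \<in> carrier_mat r r" "transpose_mat (Yt (Suc i)) = Yt (Suc i)"
    "minv (Yt (Suc i)) \<in> carrier_mat r r" "Yt (Suc i) * minv (Yt (Suc i)) = 1\<^sub>m r"
    "transpose_mat (minv (Yt (Suc i))) = minv (Yt (Suc i))"
    "X (Suc i) \<in> carrier_mat d d" "transpose_mat (X (Suc i)) = X (Suc i)" "R (Suc i) \<in> carrier_mat d r"
    "K i * V (Suc i) = sqrt (- 2 * \<sigma> i) \<cdot>\<^sub>m (R i * T)"
    "transpose_mat (V (Suc i)) * B * minv H * transpose_mat B * V (Suc i) = (2 * \<sigma> i) \<cdot>\<^sub>m (T - Yt (Suc i))"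
proof -
  note Hc = Hi(1)
  show Kc: "K i \<in> carrier_mat d d" unfolding K_def using A E B Xi Hc by auto
  have Kinv: "invertible_mat (K i)" using K_inv i unfolding K_def by auto
  note KI = minv_inv[OF Kc Kinv]
  show "K i * minv (K i) = 1\<^sub>m d" "minv (K i) \<in> carrier_mat d d" using KI by auto
  have Vd: "V (Suc i) = sqrt (- 2 * \<sigma> i) \<cdot>\<^sub>m (minv (K i) * R i * T)" using V_def i unfolding K_def by auto
  show Vc: "V (Suc i) \<in> carrier_mat d r" unfolding Vd using KI Ri T by auto
  have Yd: "Yt (Suc i) = T - (1 / (2 * \<sigma> i)) \<cdot>\<^sub>m
                  ((transpose_mat (V (Suc i)) * B) * minv H * transpose_mat (transpose_mat (V (Suc i)) * B))"
    using Y_def i by auto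
  show Yc: "Yt (Suc i) \<in> carrier_mat r r" unfolding Yd using Vc B Hc T by auto
  show Ys: "transpose_mat (Yt (Suc i)) = Yt (Suc i)"
  proof -
    note dims = Vc[THEN carrier_matD(1)] Vc[THEN carrier_matD(2)] B[THEN carrier_matD(1)] B[THEN carrier_matD(2)]
      Hc[THEN carrier_matD(1)] Hc[THEN carrier_matD(2)] T[THEN carrier_matD(1)] T[THEN carrier_matD(2)]
    show ?thesis unfolding Yd
      by (simp only: md_simps dimL dims simp_thms transpose_transpose T_sym Hi(2))
  qed
  have Yinv: "invertible_mat (Yt (Suc i))" using Y_inv i by auto
  note YI = minv_inv[OF Yc Yinv]
  show Dc: "minv (Yt (Suc i)) \<in> carrier_mat r r" "Yt (Suc i) * minv (Yt (Suc i)) = 1\<^sub>m r" using YI by auto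
  show Ds: "transpose_mat (minv (Yt (Suc i))) = minv (Yt (Suc i))" using inv_sym[OF Yc YI(3) YI(1) YI(2) Ys] .
  have Xd: "X (Suc i) = X i + V (Suc i) * minv (Yt (Suc i)) * transpose_mat (V (Suc i))" using X_def i by auto
  show "X (Suc i) \<in> carrier_mat d d" unfolding Xd using Xi Vc Dc by auto
  show "transpose_mat (X (Suc i)) = X (Suc i)"
  proof -
    note dims = Vc[THEN carrier_matD(1)] Vc[THEN carrier_matD(2)] Xi(1)[THEN carrier_matD(1)] Xi(1)[THEN carrier_matD(2)]
      Dc(1)[THEN carrier_matD(1)] Dc(1)[THEN carrier_matD(2)]
    show ?thesis unfolding Xd
      by (simp only: md_simps dimL dims simp_thms transpose_transpose Xi(2) Ds)
  qed
  have Rd: "R (Suc i) = R i + sqrt (- 2 * \<sigma> i) \<cdot>\<^sub>m (transpose_mat E * V (Suc i) * minv (Yt (Suc i)))"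
    using R_def i by auto
  show "R (Suc i) \<in> carrier_mat d r" unfolding Rd using Ri E Vc Dc by auto
  show "K i * V (Suc i) = sqrt (- 2 * \<sigma> i) \<cdot>\<^sub>m (R i * T)"
  proof -
    note dims = Kc[THEN carrier_matD(1)] Kc[THEN carrier_matD(2)] KI(3)[THEN carrier_matD(1)] KI(3)[THEN carrier_matD(2)]
      Ri[THEN carrier_matD(1)] Ri[THEN carrier_matD(2)] T[THEN carrier_matD(1)] T[THEN carrier_matD(2)]
    have e: "K i * (minv (K i) * (R i * T)) = K i * minv (K i) * (R i * T)"
      by (simp only: md_simps dimL dims simp_thms)
    have "K i * V (Suc i) = sqrt (- 2 * \<sigma> i) \<cdot>\<^sub>m (K i * (minv (K i) * (R i * T)))"
      unfolding Vd by (simp only: md_simps dimL dims simp_thms)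
    also have "\<dots> = sqrt (- 2 * \<sigma> i) \<cdot>\<^sub>m (K i * minv (K i) * (R i * T))" unfolding e ..
    finally have "K i * V (Suc i) = sqrt (- 2 * \<sigma> i) \<cdot>\<^sub>m (K i * minv (K i) * (R i * T))" .
    thus ?thesis using KI Ri T by simp
  qed
  have sig: "\<sigma> i \<noteq> 0" using shifts i by force
  show "transpose_mat (V (Suc i)) * B * minv H * transpose_mat B * V (Suc i) = (2 * \<sigma> i) \<cdot>\<^sub>m (T - Yt (Suc i))"
  proof -
    note dims = Vc[THEN carrier_matD(1)] Vc[THEN carrier_matD(2)] B[THEN carrier_matD(1)] B[THEN carrier_matD(2)]
      Hc[THEN carrier_matD(1)] Hc[THEN carrier_matD(2)] T[THEN carrier_matD(1)] T[THEN carrier_matD(2)]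
    show ?thesis unfolding Yd
      apply (simp only: md_simps dimL dims simp_thms transpose_transpose)
      apply (rule eq_matI)
       apply (simp_all only: idxL dimL dims)
      using sig by simp
  qed
qed


lemma XR: "i \<in> {1..n} \<Longrightarrow> X i \<in> carrier_mat d d \<and> transpose_mat (X i) = X i \<and> R i \<in> carrier_mat d r"
proof (induction i)
  case 0 thus ?case by simp
next
  case (Suc i)
  show ?case
  proof (cases "i = 0")
    case True thus ?thesis using X1_props R1 by simp
  next
    case False
    hence i: "i \<in> {1..<n}" using Suc.prems by auto
    hence IH: "X i \<in> carrier_mat d d" "transpose_mat (X i) = X i" "R i \<in> carrier_mat d r" using Suc.IH by auto
    show ?thesis using step_facts[OF i IH] by auto
  qed
qed

lemmas sf = step_facts[OF _ XR[THEN conjunct1] XR[THEN conjunct2, THEN conjunct1] XR[THEN conjunct2, THEN conjunct2]]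

lemma sf': assumes "i \<in> {1..<n}"
  shows "K i \<in> carrier_mat d d" "K i * minv (K i) = 1\<^sub>m d" "minv (K i) \<in> carrier_mat d d"
    "V (Suc i) \<in> carrier_mat d r" "Yt (Suc i) \<in> carrier_mat r r" "transpose_mat (Yt (Suc i)) = Yt (Suc i)"
    "minv (Yt (Suc i)) \<in> carrier_mat r r" "Yt (Suc i) * minv (Yt (Suc i)) = 1\<^sub>m r"
    "transpose_mat (minv (Yt (Suc i))) = minv (Yt (Suc i))"
    "X (Suc i) \<in> carrier_mat d d" "transpose_mat (X (Suc i)) = X (Suc i)" "R (Suc i) \<in> carrier_mat d r"
    "K i * V (Suc i) = sqrt (- 2 * \<sigma> i) \<cdot>\<^sub>m (R i * T)"
    "transpose_mat (V (Suc i)) * B * minv H * transpose_mat B * V (Suc i) = (2 * \<sigma> i) \<cdot>\<^sub>m (T - Yt (Suc i))"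
proof -
  have i1: "i \<in> {1..n}" using assms by auto
  note XRi = XR[OF i1]
  note S = step_facts[OF assms XRi[THEN conjunct1] XRi[THEN conjunct2, THEN conjunct1] XRi[THEN conjunct2, THEN conjunct2]]
  show "K i \<in> carrier_mat d d" "K i * minv (K i) = 1\<^sub>m d" "minv (K i) \<in> carrier_mat d d"
    "V (Suc i) \<in> carrier_mat d r" "Yt (Suc i) \<in> carrier_mat r r" "transpose_mat (Yt (Suc i)) = Yt (Suc i)"
    "minv (Yt (Suc i)) \<in> carrier_mat r r" "Yt (Suc i) * minv (Yt (Suc i)) = 1\<^sub>m r"
    "transpose_mat (minv (Yt (Suc i))) = minv (Yt (Suc i))"
    "X (Suc i) \<in> carrier_mat d d" "transpose_mat (X (Suc i)) = X (Suc i)" "R (Suc i) \<in> carrier_mat d r"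
    "K i * V (Suc i) = sqrt (- 2 * \<sigma> i) \<cdot>\<^sub>m (R i * T)"
    "transpose_mat (V (Suc i)) * B * minv H * transpose_mat B * V (Suc i) = (2 * \<sigma> i) \<cdot>\<^sub>m (T - Yt (Suc i))"
    using S by auto
qed

lemma Delta_car: assumes i: "i \<in> {1..<n}" shows "V (Suc i) * minv (Yt (Suc i)) * transpose_mat (V (Suc i)) \<in> carrier_mat d d"
proof -
  have "V (Suc i) * minv (Yt (Suc i)) \<in> carrier_mat d r" by (rule mult_carrier_mat[OF sf'(4)[OF i] sf'(7)[OF i]])
  thus ?thesis by (rule mult_carrier_mat) (simp add: sf'(4)[OF i])
qed

lemma Xdiff_entry: assumes "m \<in> {1..n}" "a < d" "b < d"
  shows "(\<Sum>i=1..m. h i) * X m $$ (a,b) - (\<Sum>i=1..m. h i * X i $$ (a,b)) =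
    (\<Sum>k=1..m-1. (\<Sum>j=1..k. h j) * (V (Suc k) * minv (Yt (Suc k)) * transpose_mat (V (Suc k))) $$ (a,b))"
  using assms
proof (induction m)
  case 0 thus ?case by simp
next
  case (Suc m)
  show ?case
  proof (cases "m = 0")
    case True thus ?thesis by simp
  next
    case False
    hence m: "m \<in> {1..<n}" using Suc.prems by auto
    have IH: "(\<Sum>i=1..m. h i) * X m $$ (a,b) - (\<Sum>i=1..m. h i * X i $$ (a,b)) =
      (\<Sum>k=1..m-1. (\<Sum>j=1..k. h j) * (V (Suc k) * minv (Yt (Suc k)) * transpose_mat (V (Suc k))) $$ (a,b))"
      using Suc m by auto
    have Xs: "X (Suc m) $$ (a,b) = X m $$ (a,b) + (V (Suc m) * minv (Yt (Suc m)) * transpose_mat (V (Suc m))) $$ (a,b)"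
      using X_def m Delta_car[OF m, THEN carrier_matD(1)] Delta_car[OF m, THEN carrier_matD(2)] Suc.prems by auto
    obtain m' where mm: "m = Suc m'" using False by (cases m) auto
    have r: "(\<Sum>k=1..Suc m - 1. (\<Sum>j=1..k. h j) * (V (Suc k) * minv (Yt (Suc k)) * transpose_mat (V (Suc k))) $$ (a,b))
      = (\<Sum>k=1..m-1. (\<Sum>j=1..k. h j) * (V (Suc k) * minv (Yt (Suc k)) * transpose_mat (V (Suc k))) $$ (a,b))
        + (\<Sum>j=1..m. h j) * (V (Suc m) * minv (Yt (Suc m)) * transpose_mat (V (Suc m))) $$ (a,b)"
      unfolding mm by (simp only: diff_Suc_1 sum.cl_ivl_Suc) simp
    show ?thesis unfolding r IH[symmetric] sum.cl_ivl_Suc using Xs by (simp add: algebra_simps)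
  qed
qed

lemma msum_index: "(\<And>i. i \<in> I \<Longrightarrow> M i \<in> carrier_mat d d) \<Longrightarrow> a < d \<Longrightarrow> b < d \<Longrightarrow>
  msum d (\<lambda>i. c i \<cdot>\<^sub>m M i) I $$ (a,b) = (\<Sum>i\<in>I. c i * M i $$ (a,b))"
proof -
  assume M: "\<And>i. i \<in> I \<Longrightarrow> M i \<in> carrier_mat d d" and ab: "a < d" "b < d"
  have "msum d (\<lambda>i. c i \<cdot>\<^sub>m M i) I $$ (a,b) = (\<Sum>i\<in>I. (c i \<cdot>\<^sub>m M i) $$ (a,b))"
    unfolding msum_def using ab by simp
  also have "\<dots> = (\<Sum>i\<in>I. c i * M i $$ (a,b))"
  proof (rule sum.cong[OF refl])
    fix i assume "i \<in> I" hence "M i \<in> carrier_mat d d" by (rule M)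
    thus "(c i \<cdot>\<^sub>m M i) $$ (a,b) = c i * M i $$ (a,b)" using ab by simp
  qed
  finally show ?thesis .
qed

lemma msum_car: "msum d f I \<in> carrier_mat d d" unfolding msum_def by simp
lemma dim_msum[simp]: "dim_row (msum d f I) = d" "dim_col (msum d f I) = d" unfolding msum_def by simp_all

lemma Xdiff: assumes "m \<in> {1..n}"
  shows "(\<Sum>i=1..m. h i) \<cdot>\<^sub>m X m - msum d (\<lambda>i. h i \<cdot>\<^sub>m X i) {1..m} =
    lsum d d (\<lambda>k. (\<Sum>j=1..k. h j) \<cdot>\<^sub>m (V (Suc k) * minv (Yt (Suc k)) * transpose_mat (V (Suc k)))) (m-1)"
proof (rule eq_matI)
  have car: "\<And>k. k \<in> {1..m-1} \<Longrightarrow> (\<Sum>j=1..k. h j) \<cdot>\<^sub>m (V (Suc k) * minv (Yt (Suc k)) * transpose_mat (V (Suc k))) \<in> carrier_mat d d"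
    using Delta_car assms by auto
  have lc: "lsum d d (\<lambda>k. (\<Sum>j=1..k. h j) \<cdot>\<^sub>m (V (Suc k) * minv (Yt (Suc k)) * transpose_mat (V (Suc k)))) (m-1) \<in> carrier_mat d d"
    by (rule lsum_carrier[OF car])
  show "dim_row ((\<Sum>i=1..m. h i) \<cdot>\<^sub>m X m - msum d (\<lambda>i. h i \<cdot>\<^sub>m X i) {1..m}) = dim_row (lsum d d (\<lambda>k. (\<Sum>j=1..k. h j) \<cdot>\<^sub>m (V (Suc k) * minv (Yt (Suc k)) * transpose_mat (V (Suc k)))) (m-1))"
    "dim_col ((\<Sum>i=1..m. h i) \<cdot>\<^sub>m X m - msum d (\<lambda>i. h i \<cdot>\<^sub>m X i) {1..m}) = dim_col (lsum d d (\<lambda>k. (\<Sum>j=1..k. h j) \<cdot>\<^sub>m (V (Suc k) * minv (Yt (Suc k)) * transpose_mat (V (Suc k)))) (m-1))"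
    using lc by (auto simp: msum_def)
  fix a b assume "a < dim_row (lsum d d (\<lambda>k. (\<Sum>j=1..k. h j) \<cdot>\<^sub>m (V (Suc k) * minv (Yt (Suc k)) * transpose_mat (V (Suc k)))) (m-1))"
    "b < dim_col (lsum d d (\<lambda>k. (\<Sum>j=1..k. h j) \<cdot>\<^sub>m (V (Suc k) * minv (Yt (Suc k)) * transpose_mat (V (Suc k)))) (m-1))"
  hence ab: "a < d" "b < d" using lc by auto
  have Xm: "X m \<in> carrier_mat d d" using XR assms by auto
  have "((\<Sum>i=1..m. h i) \<cdot>\<^sub>m X m - msum d (\<lambda>i. h i \<cdot>\<^sub>m X i) {1..m}) $$ (a,b)
     = (\<Sum>i=1..m. h i) * X m $$ (a,b) - (\<Sum>i=1..m. h i * X i $$ (a,b))"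
    using ab Xm[THEN carrier_matD(1)] Xm[THEN carrier_matD(2)] msum_index[of "{1..m}" X a b h] XR assms by (simp add: msum_car)
  also have "\<dots> = (\<Sum>k=1..m-1. (\<Sum>j=1..k. h j) * (V (Suc k) * minv (Yt (Suc k)) * transpose_mat (V (Suc k))) $$ (a,b))"
    by (rule Xdiff_entry[OF assms ab])
  also have "\<dots> = (\<Sum>k=1..m-1. ((\<Sum>j=1..k. h j) \<cdot>\<^sub>m (V (Suc k) * minv (Yt (Suc k)) * transpose_mat (V (Suc k)))) $$ (a,b))"
  proof (rule sum.cong[OF refl])
    fix k assume k: "k \<in> {1..m-1}"
    hence k': "k \<in> {1..<n}" using assms by auto
    note D = Delta_car[OF k']
    show "(\<Sum>j=1..k. h j) * (V (Suc k) * minv (Yt (Suc k)) * transpose_mat (V (Suc k))) $$ (a,b) =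
      ((\<Sum>j=1..k. h j) \<cdot>\<^sub>m (V (Suc k) * minv (Yt (Suc k)) * transpose_mat (V (Suc k)))) $$ (a,b)"
      using D[THEN carrier_matD(1)] D[THEN carrier_matD(2)] ab by simp
  qed
  also have "\<dots> = lsum d d (\<lambda>k. (\<Sum>j=1..k. h j) \<cdot>\<^sub>m (V (Suc k) * minv (Yt (Suc k)) * transpose_mat (V (Suc k)))) (m-1) $$ (a,b)"
    using lsum_index[OF car ab] by simp
  finally show "((\<Sum>i=1..m. h i) \<cdot>\<^sub>m X m - msum d (\<lambda>i. h i \<cdot>\<^sub>m X i) {1..m}) $$ (a,b) = \<dots>" .
qed

lemma msum_split: assumes m: "m \<in> {1..<n}"
  shows "msum d (\<lambda>i. g i \<cdot>\<^sub>m X i) {1..Suc m} = msum d (\<lambda>i. (g(m := g m + g (Suc m))) i \<cdot>\<^sub>m X i) {1..m}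
     + g (Suc m) \<cdot>\<^sub>m (V (Suc m) * minv (Yt (Suc m)) * transpose_mat (V (Suc m)))"
proof (rule eq_matI)
  have Dc: "V (Suc m) * minv (Yt (Suc m)) * transpose_mat (V (Suc m)) \<in> carrier_mat d d" using Delta_car m .
  show "dim_row (msum d (\<lambda>i. g i \<cdot>\<^sub>m X i) {1..Suc m}) = dim_row (msum d (\<lambda>i. (g(m := g m + g (Suc m))) i \<cdot>\<^sub>m X i) {1..m}
     + g (Suc m) \<cdot>\<^sub>m (V (Suc m) * minv (Yt (Suc m)) * transpose_mat (V (Suc m))))"
   "dim_col (msum d (\<lambda>i. g i \<cdot>\<^sub>m X i) {1..Suc m}) = dim_col (msum d (\<lambda>i. (g(m := g m + g (Suc m))) i \<cdot>\<^sub>m X i) {1..m}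
     + g (Suc m) \<cdot>\<^sub>m (V (Suc m) * minv (Yt (Suc m)) * transpose_mat (V (Suc m))))" using Dc by (auto simp: msum_def)
  fix a b assume "a < dim_row (msum d (\<lambda>i. (g(m := g m + g (Suc m))) i \<cdot>\<^sub>m X i) {1..m}
     + g (Suc m) \<cdot>\<^sub>m (V (Suc m) * minv (Yt (Suc m)) * transpose_mat (V (Suc m))))"
    "b < dim_col (msum d (\<lambda>i. (g(m := g m + g (Suc m))) i \<cdot>\<^sub>m X i) {1..m}
     + g (Suc m) \<cdot>\<^sub>m (V (Suc m) * minv (Yt (Suc m)) * transpose_mat (V (Suc m))))"
  hence ab: "a < d" "b < d" using Dc by auto
  have Xc: "\<And>i. i \<in> {1..Suc m} \<Longrightarrow> X i \<in> carrier_mat d d" using XR m by auto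
  have Xs: "X (Suc m) $$ (a,b) = X m $$ (a,b) + (V (Suc m) * minv (Yt (Suc m)) * transpose_mat (V (Suc m))) $$ (a,b)"
    using X_def m Dc[THEN carrier_matD(1)] Dc[THEN carrier_matD(2)] ab by auto
  have L: "msum d (\<lambda>i. g i \<cdot>\<^sub>m X i) {1..Suc m} $$ (a,b) = (\<Sum>i=1..m. g i * X i $$ (a,b)) + g (Suc m) * X (Suc m) $$ (a,b)"
    using Xc ab msum_index[of "{1..Suc m}" X a b g] by simp
  have s1: "(\<Sum>i=1..m. (g(m := g m + g (Suc m))) i * X i $$ (a,b)) = (\<Sum>i=1..m. g i * X i $$ (a,b)) + g (Suc m) * X m $$ (a,b)"
  proof -
    have "(\<Sum>i=1..m. (g(m := g m + g (Suc m))) i * X i $$ (a,b)) = (\<Sum>i=1..m. g i * X i $$ (a,b) + (if i = m then g (Suc m) * X m $$ (a,b) else 0))"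
      by (rule sum.cong) (auto simp: algebra_simps)
    also have "\<dots> = (\<Sum>i=1..m. g i * X i $$ (a,b)) + g (Suc m) * X m $$ (a,b)"
      using m by (simp add: sum.distrib)
    finally show ?thesis .
  qed
  have R: "(msum d (\<lambda>i. (g(m := g m + g (Suc m))) i \<cdot>\<^sub>m X i) {1..m}
     + g (Suc m) \<cdot>\<^sub>m (V (Suc m) * minv (Yt (Suc m)) * transpose_mat (V (Suc m)))) $$ (a,b)
     = (\<Sum>i=1..m. (g(m := g m + g (Suc m))) i * X i $$ (a,b)) + g (Suc m) * (V (Suc m) * minv (Yt (Suc m)) * transpose_mat (V (Suc m))) $$ (a,b)"
    using Xc ab Dc[THEN carrier_matD(1)] Dc[THEN carrier_matD(2)] msum_index[of "{1..m}" X a b "g(m := g m + g (Suc m))"] by (simp add: msum_car)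
  show "msum d (\<lambda>i. g i \<cdot>\<^sub>m X i) {1..Suc m} $$ (a,b) = (msum d (\<lambda>i. (g(m := g m + g (Suc m))) i \<cdot>\<^sub>m X i) {1..m}
     + g (Suc m) \<cdot>\<^sub>m (V (Suc m) * minv (Yt (Suc m)) * transpose_mat (V (Suc m)))) $$ (a,b)"
    unfolding L R s1 Xs by (simp add: algebra_simps)
qed

end

context radi begin

lemma msum_sym: assumes I: "I \<subseteq> {1..n}"
  shows "transpose_mat (msum d (\<lambda>i. c i \<cdot>\<^sub>m X i) I) = msum d (\<lambda>i. c i \<cdot>\<^sub>m X i) I"
proof (rule eq_matI)
  fix a b assume ab: "a < dim_row (msum d (\<lambda>i. c i \<cdot>\<^sub>m X i) I)" "b < dim_col (msum d (\<lambda>i. c i \<cdot>\<^sub>m X i) I)"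
  hence ab': "a < d" "b < d" by auto
  have Xc: "\<And>i. i \<in> I \<Longrightarrow> X i \<in> carrier_mat d d" using XR I by auto
  have "transpose_mat (msum d (\<lambda>i. c i \<cdot>\<^sub>m X i) I) $$ (a,b) = msum d (\<lambda>i. c i \<cdot>\<^sub>m X i) I $$ (b,a)"
    using ab' by simp
  also have "\<dots> = (\<Sum>i\<in>I. c i * X i $$ (b,a))" by (rule msum_index[OF Xc ab'(2,1)])
  also have "\<dots> = (\<Sum>i\<in>I. c i * X i $$ (a,b))"
  proof (rule sum.cong[OF refl])
    fix i assume i: "i \<in> I"
    have "X i $$ (b,a) = transpose_mat (X i) $$ (a,b)" using Xc[OF i] ab' by simp
    also have "\<dots> = X i $$ (a,b)" using XR I i by auto
    finally show "c i * X i $$ (b,a) = c i * X i $$ (a,b)" by simp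
  qed
  also have "\<dots> = msum d (\<lambda>i. c i \<cdot>\<^sub>m X i) I $$ (a,b)" by (rule msum_index[OF Xc ab', symmetric])
  finally show "transpose_mat (msum d (\<lambda>i. c i \<cdot>\<^sub>m X i) I) $$ (a,b) = msum d (\<lambda>i. c i \<cdot>\<^sub>m X i) I $$ (a,b)" .
qed auto

lemma msum_one: "msum d (\<lambda>i. c i \<cdot>\<^sub>m X i) {1..1} = c 1 \<cdot>\<^sub>m X 1"
proof (rule eq_matI)
  have Xc: "\<And>i. i \<in> {1..1} \<Longrightarrow> X i \<in> carrier_mat d d" using XR n by auto
  fix a b assume ab: "a < dim_row (c 1 \<cdot>\<^sub>m X 1)" "b < dim_col (c 1 \<cdot>\<^sub>m X 1)"
  hence ab': "a < d" "b < d" using X1_props by auto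
  show "msum d (\<lambda>i. c i \<cdot>\<^sub>m X i) {1..1} $$ (a,b) = (c 1 \<cdot>\<^sub>m X 1) $$ (a,b)"
    using msum_index[of "{1..1}" X a b c] Xc ab' X1_props by simp
qed (use X1_props in auto)

abbreviation CC where "CC \<equiv> (\<lambda>i j. transpose_mat (V i) * B * minv H * transpose_mat B * V j)"

lemma sstep: assumes m: "m \<in> {1..<n}"
  and Xp: "Xp \<in> carrier_mat d d" "transpose_mat Xp = Xp"
  shows "riccati A E B C H (Xp + \<gamma> \<cdot>\<^sub>m (V (Suc m) * minv (Yt (Suc m)) * transpose_mat (V (Suc m))))
     = riccati A E B C H Xp + (\<gamma>*sqrt (- 2 * \<sigma> m)) \<cdot>\<^sub>m (R m * T * transpose_mat (transpose_mat E * V (Suc m) * minv (Yt (Suc m))) + (transpose_mat E * V (Suc m) * minv (Yt (Suc m))) * T * transpose_mat (R m))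
       - (2*\<gamma>*\<sigma> m) \<cdot>\<^sub>m ((transpose_mat E * V (Suc m) * minv (Yt (Suc m))) * Yt (Suc m) * transpose_mat (transpose_mat E * V (Suc m) * minv (Yt (Suc m))))
       - (2*\<gamma>*\<gamma>*\<sigma> m) \<cdot>\<^sub>m ((transpose_mat E * V (Suc m) * minv (Yt (Suc m))) * (T - Yt (Suc m)) * transpose_mat (transpose_mat E * V (Suc m) * minv (Yt (Suc m))))
       + \<gamma> \<cdot>\<^sub>m (transpose_mat E * (X m - Xp) * B * minv H * transpose_mat B * (V (Suc m) * minv (Yt (Suc m)) * transpose_mat (V (Suc m))) * E
               + transpose_mat (transpose_mat E * (X m - Xp) * B * minv H * transpose_mat B * (V (Suc m) * minv (Yt (Suc m)) * transpose_mat (V (Suc m))) * E))"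
proof -
  have m1: "m \<in> {1..n}" using m by auto
  have sg: "\<sigma> m < 0" using shifts m by auto
  have hss: "sqrt (- 2 * \<sigma> m) * sqrt (- 2 * \<sigma> m) = - 2 * \<sigma> m" using sg by simp
  show ?thesis
    by (rule step_lemma[OF A E B C Hi Xp XR[OF m1, THEN conjunct1] XR[OF m1, THEN conjunct2, THEN conjunct1]
      sf'(4)[OF m] sf'(7)[OF m] sf'(9)[OF m] sf'(5)[OF m] T T_sym XR[OF m1, THEN conjunct2, THEN conjunct2]
      refl sf'(13)[OF m, unfolded K_def] sf'(14)[OF m] sf'(8)[OF m] hss])
qed


lemma smult_one_mat': "1 \<cdot>\<^sub>m (M::real mat) = M" by (rule eq_matI) auto

lemma base: assumes g: "g 1 + g 2 = 1"
  shows "riccati A E B C H (msum d (\<lambda>i. g i \<cdot>\<^sub>m X i) {1..Suc (Suc 0)}) =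
    hcats d R (Suc (Suc 0)) * RHn r T Yt CC \<sigma> (Suc (Suc 0)) g * transpose_mat (hcats d R (Suc (Suc 0)))"
proof -
  have m: "1 \<in> {1..<n}" using n by auto
  define V2 where "V2 = V 2"
  define D2 where "D2 = minv (Yt 2)"
  define Y2 where "Y2 = Yt 2"
  define P where "P = transpose_mat E * V2 * D2"
  define s where "s = sqrt (- 2 * \<sigma> 1)"
  define \<gamma> where "\<gamma> = g 2"
  have V2c: "V2 \<in> carrier_mat d r" unfolding V2_def using sf'(4)[OF m] by (simp add: numeral_2_eq_2)
  have D2c: "D2 \<in> carrier_mat r r" unfolding D2_def using sf'(7)[OF m] by (simp add: numeral_2_eq_2)
  have Y2c: "Y2 \<in> carrier_mat r r" unfolding Y2_def using sf'(5)[OF m] by (simp add: numeral_2_eq_2)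
  have Pc: "P \<in> carrier_mat d r" unfolding P_def using E V2c D2c by auto
  have X1c: "X 1 \<in> carrier_mat d d" and X1s: "transpose_mat (X 1) = X 1" using X1_props by auto
  have ms: "msum d (\<lambda>i. g i \<cdot>\<^sub>m X i) {1..Suc (Suc 0)} = X 1 + \<gamma> \<cdot>\<^sub>m (V2 * D2 * transpose_mat V2)"
  proof -
    have "msum d (\<lambda>i. g i \<cdot>\<^sub>m X i) {1..Suc 1} = msum d (\<lambda>i. (g(1 := g 1 + g (Suc 1))) i \<cdot>\<^sub>m X i) {1..1}
      + g (Suc 1) \<cdot>\<^sub>m (V (Suc 1) * minv (Yt (Suc 1)) * transpose_mat (V (Suc 1)))" by (rule msum_split[OF m])
    also have "msum d (\<lambda>i. (g(1 := g 1 + g (Suc 1))) i \<cdot>\<^sub>m X i) {1..1} = X 1"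
      unfolding msum_one using g X1c by (simp add: numeral_2_eq_2 smult_one_mat')
    finally show ?thesis unfolding V2_def D2_def \<gamma>_def by (simp add: numeral_2_eq_2)
  qed
  have st: "riccati A E B C H (X 1 + \<gamma> \<cdot>\<^sub>m (V2 * D2 * transpose_mat V2))
     = riccati A E B C H (X 1) + (\<gamma>*s) \<cdot>\<^sub>m (R 1 * T * transpose_mat P + P * T * transpose_mat (R 1))
       - (2*\<gamma>*\<sigma> 1) \<cdot>\<^sub>m (P * Y2 * transpose_mat P)
       - (2*\<gamma>*\<gamma>*\<sigma> 1) \<cdot>\<^sub>m (P * (T - Y2) * transpose_mat P)
       + \<gamma> \<cdot>\<^sub>m (transpose_mat E * (X 1 - X 1) * B * minv H * transpose_mat B * (V2 * D2 * transpose_mat V2) * E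
               + transpose_mat (transpose_mat E * (X 1 - X 1) * B * minv H * transpose_mat B * (V2 * D2 * transpose_mat V2) * E))"
    using sstep[OF m X1c X1s, of \<gamma>] unfolding V2_def D2_def P_def s_def Y2_def by (simp add: numeral_2_eq_2)
  have R2: "R 2 = R 1 + s \<cdot>\<^sub>m P" using R_def m unfolding P_def s_def V2_def D2_def by (auto simp: numeral_2_eq_2)
  have hc: "hcats d R (Suc (Suc 0)) = hcat (R 1) (R 2)" using R1 by (simp add: hcat0 numeral_2_eq_2)
  have RH: "RHn r T Yt CC \<sigma> (Suc (Suc 0)) g = four_block_mat ((g 1)^2 \<cdot>\<^sub>m T + (\<gamma> - \<gamma>^2) \<cdot>\<^sub>m Y2) ((\<gamma> - \<gamma>^2) \<cdot>\<^sub>m (T - Y2))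
     ((\<gamma> - \<gamma>^2) \<cdot>\<^sub>m (T - Y2)) (\<gamma>^2 \<cdot>\<^sub>m T + (\<gamma> - \<gamma>^2) \<cdot>\<^sub>m Y2)"
    unfolding \<gamma>_def Y2_def by (simp only: RHn.simps Let_def)
  have R2c: "R 2 \<in> carrier_mat d r" unfolding R2 using R1 Pc by auto
  have phi: "hcat (R 1) (R 2) * RHn r T Yt CC \<sigma> (Suc (Suc 0)) g * transpose_mat (hcat (R 1) (R 2)) =
     R 1 * ((g 1)^2 \<cdot>\<^sub>m T + (\<gamma> - \<gamma>^2) \<cdot>\<^sub>m Y2) * transpose_mat (R 1) + R 1 * ((\<gamma> - \<gamma>^2) \<cdot>\<^sub>m (T - Y2)) * transpose_mat (R 2)
     + R 2 * ((\<gamma> - \<gamma>^2) \<cdot>\<^sub>m (T - Y2)) * transpose_mat (R 1) + R 2 * (\<gamma>^2 \<cdot>\<^sub>m T + (\<gamma> - \<gamma>^2) \<cdot>\<^sub>m Y2) * transpose_mat (R 2)"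
    unfolding RH by (rule phi_fb[OF R1 R2c]) (use T Y2c in auto)
  have sg: "\<sigma> 1 < 0" using shifts m by auto
  have hss: "s * s = - 2 * \<sigma> 1" unfolding s_def using sg by simp
  have g1: "(g 1)^2 = \<gamma>^2 - 2*\<gamma> + 1"
  proof -
    have e: "g 1 = 1 - \<gamma>" using g unfolding \<gamma>_def by simp
    show ?thesis unfolding e by (simp add: power2_eq_square algebra_simps)
  qed
  have ba: "R 1 * ((g 1)^2 \<cdot>\<^sub>m T + (\<gamma> - \<gamma>^2) \<cdot>\<^sub>m Y2) * transpose_mat (R 1) + R 1 * ((\<gamma> - \<gamma>^2) \<cdot>\<^sub>m (T - Y2)) * transpose_mat (R 1 + s \<cdot>\<^sub>m P)
     + (R 1 + s \<cdot>\<^sub>m P) * ((\<gamma> - \<gamma>^2) \<cdot>\<^sub>m (T - Y2)) * transpose_mat (R 1)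
     + (R 1 + s \<cdot>\<^sub>m P) * (\<gamma>^2 \<cdot>\<^sub>m T + (\<gamma> - \<gamma>^2) \<cdot>\<^sub>m Y2) * transpose_mat (R 1 + s \<cdot>\<^sub>m P)
   = 1 \<cdot>\<^sub>m (R 1 * T * transpose_mat (R 1)) + (\<gamma>*s) \<cdot>\<^sub>m (R 1 * T * transpose_mat P + P * T * transpose_mat (R 1))
       - (2*\<gamma>*\<sigma> 1) \<cdot>\<^sub>m (P * Y2 * transpose_mat P) - (2*\<gamma>*\<gamma>*\<sigma> 1) \<cdot>\<^sub>m (P * (T - Y2) * transpose_mat P)"
    by (rule bn_alg[OF R1 Pc T Y2c g1 refl hss])
  have lhs: "riccati A E B C H (msum d (\<lambda>i. g i \<cdot>\<^sub>m X i) {1..Suc (Suc 0)}) =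
     R 1 * T * transpose_mat (R 1) + (\<gamma>*s) \<cdot>\<^sub>m (R 1 * T * transpose_mat P + P * T * transpose_mat (R 1))
       - (2*\<gamma>*\<sigma> 1) \<cdot>\<^sub>m (P * Y2 * transpose_mat P)
       - (2*\<gamma>*\<gamma>*\<sigma> 1) \<cdot>\<^sub>m (P * (T - Y2) * transpose_mat P)
       + \<gamma> \<cdot>\<^sub>m (transpose_mat E * (X 1 - X 1) * B * minv H * transpose_mat B * (V2 * D2 * transpose_mat V2) * E
               + transpose_mat (transpose_mat E * (X 1 - X 1) * B * minv H * transpose_mat B * (V2 * D2 * transpose_mat V2) * E))"
    unfolding ms st res1 ..
  note cars = A E B C Hi(1) X1c V2c D2c Y2c Pc T R1
  note dims = cars[THEN carrier_matD(1)] cars[THEN carrier_matD(2)]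
  show ?thesis unfolding hc phi R2[symmetric] ba[unfolded R2[symmetric]] lhs
    apply (simp only: md_simps dimL dims simp_thms transpose_transpose)
    apply (rule eq_matI)
     apply (simp_all only: idxL dimL dims)
    done
qed


lemma stepcase: assumes kn: "Suc (Suc (Suc k)) \<le> n" and gs: "(\<Sum>i=1..Suc (Suc (Suc k)). g i) = 1"
  and IH: "\<And>g'. (\<Sum>i=1..Suc (Suc k). g' i) = 1 \<Longrightarrow> riccati A E B C H (msum d (\<lambda>i. g' i \<cdot>\<^sub>m X i) {1..Suc (Suc k)})
     = hcats d R (Suc (Suc k)) * RHn r T Yt CC \<sigma> (Suc (Suc k)) g' * transpose_mat (hcats d R (Suc (Suc k)))"
  shows "riccati A E B C H (msum d (\<lambda>i. g i \<cdot>\<^sub>m X i) {1..Suc (Suc (Suc k))})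
     = hcats d R (Suc (Suc (Suc k))) * RHn r T Yt CC \<sigma> (Suc (Suc (Suc k))) g * transpose_mat (hcats d R (Suc (Suc (Suc k))))"
proof -
  define m where "m = Suc (Suc k)"
  define N where "N = Suc (Suc (Suc k))"
  have hm: "m \<in> {1..<n}" using kn unfolding m_def by auto
  have Nm: "N = Suc m" unfolding N_def m_def by simp
  define g' where "g' = g(m := g m + g N)"
  have gs': "(\<Sum>i=1..m. g' i) = 1"
  proof -
    have "(\<Sum>i=1..m. g' i) = (\<Sum>i=1..m. g i + (if i = m then g N else 0))"
      unfolding g'_def by (rule sum.cong) auto
    also have "\<dots> = (\<Sum>i=1..m. g i) + g N" using hm by (simp add: sum.distrib)
    also have "\<dots> = (\<Sum>i=1..N. g i)" unfolding Nm by simp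
    finally show ?thesis using gs unfolding N_def by simp
  qed
  define Xp where "Xp = msum d (\<lambda>i. g' i \<cdot>\<^sub>m X i) {1..m}"
  have Xpc: "Xp \<in> carrier_mat d d" unfolding Xp_def by (rule msum_car)
  have Xps: "transpose_mat Xp = Xp" unfolding Xp_def by (rule msum_sym) (use hm in auto)
  define \<gamma> where "\<gamma> = g N"
  define s where "s = sqrt (- 2 * \<sigma> m)"
  define Vn where "Vn = V N"
  define Dn where "Dn = minv (Yt N)"
  define Yn where "Yn = Yt N"
  define P where "P = transpose_mat E * Vn * Dn"
  have Vnc: "Vn \<in> carrier_mat d r" unfolding Vn_def Nm using sf'(4)[OF hm] .
  have Dnc: "Dn \<in> carrier_mat r r" unfolding Dn_def Nm using sf'(7)[OF hm] .
  have Dns: "transpose_mat Dn = Dn" unfolding Dn_def Nm using sf'(9)[OF hm] .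
  have Ync: "Yn \<in> carrier_mat r r" unfolding Yn_def Nm using sf'(5)[OF hm] .
  have Pc: "P \<in> carrier_mat d r" unfolding P_def using E Vnc Dnc by auto
  have Xmc: "X m \<in> carrier_mat d d" using XR hm by auto
  have Rmc: "R m \<in> carrier_mat d r" using XR hm by auto
  have RN: "R N = R m + s \<cdot>\<^sub>m P" using R_def hm unfolding Nm P_def s_def Vn_def Dn_def by auto
  have RNc: "R N \<in> carrier_mat d r" unfolding RN using Rmc Pc by auto
  have Rc: "\<And>i. i \<in> {1..N} \<Longrightarrow> R i \<in> carrier_mat d r" using XR kn unfolding N_def by auto
  have ms: "msum d (\<lambda>i. g i \<cdot>\<^sub>m X i) {1..N} = Xp + \<gamma> \<cdot>\<^sub>m (Vn * Dn * transpose_mat Vn)"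
    unfolding Xp_def g'_def \<gamma>_def Vn_def Dn_def Nm by (rule msum_split[OF hm])
  define Z where "Z = transpose_mat E * (X m - Xp) * B * minv H * transpose_mat B * (Vn * Dn * transpose_mat Vn) * E"
  have st: "riccati A E B C H (Xp + \<gamma> \<cdot>\<^sub>m (Vn * Dn * transpose_mat Vn))
     = riccati A E B C H Xp + (\<gamma>*s) \<cdot>\<^sub>m (R m * T * transpose_mat P + P * T * transpose_mat (R m))
       - (2*\<gamma>*\<sigma> m) \<cdot>\<^sub>m (P * Yn * transpose_mat P)
       - (2*\<gamma>*\<gamma>*\<sigma> m) \<cdot>\<^sub>m (P * (T - Yn) * transpose_mat P)
       + \<gamma> \<cdot>\<^sub>m (Z + transpose_mat Z)"
    using sstep[OF hm Xpc Xps, of \<gamma>] unfolding Z_def Vn_def Dn_def P_def s_def Yn_def Nm .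
  have IH': "riccati A E B C H Xp = hcats d R m * RHn r T Yt CC \<sigma> m g' * transpose_mat (hcats d R m)"
    unfolding Xp_def m_def by (rule IH[OF gs'[unfolded m_def]])
  define cc where "cc = (\<lambda>i. g N * sum g {1..i} * (1 / (2 * sqrt (\<sigma> i * \<sigma> (Suc (Suc k))))))"
  define Mn where "Mn = vcats r (\<lambda>i. cc i \<cdot>\<^sub>m CC (Suc i) N) (Suc k)"
  define Ct where "Ct = vcat (hcat (hcat (0\<^sub>m (Suc (Suc k) * r) (Suc k * r)) (vcat Mn (0\<^sub>m r r) - vcat (0\<^sub>m r r) Mn))
                (vcat (0\<^sub>m r r) Mn - vcat Mn (0\<^sub>m r r))) (0\<^sub>m r (N * r))"
  define Q11 where "Q11 = ((g N)^2 - 2 * g N) \<cdot>\<^sub>m T + (g N - (g N)^2) \<cdot>\<^sub>m Yt N"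
  define Q12 where "Q12 = (g N - (g N)^2) \<cdot>\<^sub>m (T - Yt N)"
  define Q22 where "Q22 = (g N)^2 \<cdot>\<^sub>m T + (g N - (g N)^2) \<cdot>\<^sub>m Yt N"
  have RHs: "RHn r T Yt CC \<sigma> N g = blkdiag (RHn r T Yt CC \<sigma> m g') (0\<^sub>m r r)
    + blkdiag (0\<^sub>m (Suc k * r) (Suc k * r)) (four_block_mat Q11 Q12 Q12 Q22) + (Ct + transpose_mat Ct)"
    unfolding g'_def m_def Q11_def Q12_def Q22_def
    by (rule RHn_step[where k=k and N=N and r=r and Mn=Mn and Ct=Ct and T=T and g=g and \<sigma>=\<sigma> and Y=Yt and Cc=CC, OF N_def Mn_def[unfolded cc_def] Ct_def])
  have Yc: "\<And>i. i \<in> {2..N} \<Longrightarrow> Yt i \<in> carrier_mat r r"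
  proof -
    fix i assume i: "i \<in> {2..N}"
    then obtain j where j: "i = Suc j" "j \<in> {1..<n}" using kn unfolding N_def by (cases i) auto
    show "Yt i \<in> carrier_mat r r" unfolding j using sf'(5)[OF j(2)] .
  qed
  have Vc: "\<And>i. i \<in> {2..N} \<Longrightarrow> V i \<in> carrier_mat d r"
  proof -
    fix i assume i: "i \<in> {2..N}"
    then obtain j where j: "i = Suc j" "j \<in> {1..<n}" using kn unfolding N_def by (cases i) auto
    show "V i \<in> carrier_mat d r" unfolding j using sf'(4)[OF j(2)] .
  qed
  have CCc: "\<And>i j. i \<in> {2..N} \<Longrightarrow> j \<in> {2..N} \<Longrightarrow> CC i j \<in> carrier_mat r r"
    using Vc B Hi(1) by (meson mult_carrier_mat transpose_carrier_mat)
  have hk1: "hcats d R (Suc k) \<in> carrier_mat d (Suc k * r)" by (rule hcats_carrier) (use Rc in \<open>auto simp: N_def\<close>)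
  have hmc: "hcats d R m \<in> carrier_mat d (m * r)" by (rule hcats_carrier) (use Rc in \<open>auto simp: N_def m_def\<close>)
  have hcNc: "hcats d R N \<in> carrier_mat d (N * r)" by (rule hcats_carrier) (use Rc in \<open>auto simp: N_def m_def\<close>)
  have hcN: "hcats d R N = hcat (hcats d R m) (R N)" unfolding Nm by simp
  have hcm: "hcats d R m = hcat (hcats d R (Suc k)) (R m)" unfolding m_def by simp
  have RHm: "RHn r T Yt CC \<sigma> m g' \<in> carrier_mat (m * r) (m * r)"
    by (rule RHn_carrier) (use T Yc CCc in \<open>auto simp: m_def N_def\<close>)
  have Q11c: "Q11 \<in> carrier_mat r r" unfolding Q11_def using T Yc[of N] by (auto simp: N_def)
  have Q12c: "Q12 \<in> carrier_mat r r" unfolding Q12_def using T Yc[of N] by (auto simp: N_def)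
  have Q22c: "Q22 \<in> carrier_mat r r" unfolding Q22_def using T Yc[of N] by (auto simp: N_def)
  have Gc: "\<And>i. i \<in> {1..Suc k} \<Longrightarrow> cc i \<cdot>\<^sub>m CC (Suc i) N \<in> carrier_mat r r"
    using CCc by (auto simp: N_def)
  have Mnc: "Mn \<in> carrier_mat (Suc k * r) r" unfolding Mn_def by (rule vcats_carrier[OF Gc])
  define U1 where "U1 = vcat Mn (0\<^sub>m r r) - vcat (0\<^sub>m r r) Mn"
  define U2 where "U2 = vcat (0\<^sub>m r r) Mn - vcat Mn (0\<^sub>m r r)"
  have U1c: "U1 \<in> carrier_mat (Suc k * r + r) r" unfolding U1_def
    by (rule minus_carrier_mat, rule carrier_matI) (use Mnc in auto)
  have U2c: "U2 \<in> carrier_mat (Suc k * r + r) r" unfolding U2_def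
    by (rule minus_carrier_mat) (use Mnc in auto)
  have Ct': "Ct = vcat (hcat (hcat (0\<^sub>m (Suc k * r + r) (Suc k * r)) U1) U2) (0\<^sub>m r (Suc k * r + r + r))"
  proof -
    have e1: "Suc (Suc k) * r = Suc k * r + r" by simp
    have e2: "N * r = Suc k * r + r + r" unfolding N_def by simp
    show ?thesis unfolding Ct_def e1 e2 U1_def U2_def ..
  qed
  have M1c: "blkdiag (RHn r T Yt CC \<sigma> m g') (0\<^sub>m r r) \<in> carrier_mat (N * r) (N * r)"
    using RHm unfolding Nm by (intro carrier_matI) (auto simp: blkdiag_def)
  have M2c: "blkdiag (0\<^sub>m (Suc k * r) (Suc k * r)) (four_block_mat Q11 Q12 Q12 Q22) \<in> carrier_mat (N * r) (N * r)"
    using Q11c Q12c Q22c unfolding N_def by (intro carrier_matI) (auto simp: blkdiag_def)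
  have Ctc: "Ct \<in> carrier_mat (N * r) (N * r)"
    unfolding Ct' using U1c U2c unfolding N_def by (intro carrier_matI) auto
  have phi: "hcats d R N * RHn r T Yt CC \<sigma> N g * transpose_mat (hcats d R N) =
     hcats d R N * blkdiag (RHn r T Yt CC \<sigma> m g') (0\<^sub>m r r) * transpose_mat (hcats d R N)
   + hcats d R N * blkdiag (0\<^sub>m (Suc k * r) (Suc k * r)) (four_block_mat Q11 Q12 Q12 Q22) * transpose_mat (hcats d R N)
   + hcats d R N * Ct * transpose_mat (hcats d R N) + transpose_mat (hcats d R N * Ct * transpose_mat (hcats d R N))"
    unfolding RHs by (rule phi_sum[OF hcNc M1c M2c Ctc])
  have phi1: "hcats d R N * blkdiag (RHn r T Yt CC \<sigma> m g') (0\<^sub>m r r) * transpose_mat (hcats d R N) = riccati A E B C H Xp"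
    unfolding IH' hcN by (rule phi_An[OF hmc RNc RHm])
  have phi2: "hcats d R N * blkdiag (0\<^sub>m (Suc k * r) (Suc k * r)) (four_block_mat Q11 Q12 Q12 Q22) * transpose_mat (hcats d R N)
     = R m * Q11 * transpose_mat (R m) + R m * Q12 * transpose_mat (R N) + R N * Q12 * transpose_mat (R m) + R N * Q22 * transpose_mat (R N)"
    unfolding hcN hcm by (rule phi_Bn[OF hk1 Rmc RNc Q11c Q12c Q12c Q22c])
  have phi3: "hcats d R N * Ct * transpose_mat (hcats d R N) = hcats d R m * U1 * transpose_mat (R m) + hcats d R m * U2 * transpose_mat (R N)"
    unfolding hcN hcm Ct' by (rule phi_Ct[OF hk1 Rmc RNc U1c U2c])
  have Z0c: "0\<^sub>m r r \<in> carrier_mat r r" by simp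
  define W1 where "W1 = lsum d r (\<lambda>i. R i * (cc i \<cdot>\<^sub>m CC (Suc i) N)) (Suc k)"
  define W2 where "W2 = lsum d r (\<lambda>i. R (Suc i) * (cc i \<cdot>\<^sub>m CC (Suc i) N)) (Suc k)"
  have hW1: "hcats d R m * vcat Mn (0\<^sub>m r r) = W1"
  proof -
    have "hcats d R m * vcat Mn (0\<^sub>m r r) = hcats d R (Suc k) * Mn + R m * 0\<^sub>m r r"
      unfolding hcm by (rule hv_mult[OF hk1 Rmc Mnc Z0c])
    also have "\<dots> = hcats d R (Suc k) * Mn" using hk1 Mnc Rmc by simp
    also have "\<dots> = W1" unfolding W1_def Mn_def by (rule hcats_vcats) (use Rc Gc in \<open>auto simp: N_def\<close>)
    finally show ?thesis .
  qed
  have hW2: "hcats d R m * vcat (0\<^sub>m r r) Mn = W2"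
    unfolding W2_def Mn_def m_def by (rule hcats_vcats_shift) (use Rc Gc in \<open>auto simp: N_def\<close>)
  have RG1: "\<And>i. i \<in> {1..Suc k} \<Longrightarrow> R i * (cc i \<cdot>\<^sub>m CC (Suc i) N) \<in> carrier_mat d r"
  proof -
    fix i assume i: "i \<in> {1..Suc k}"
    have "R i \<in> carrier_mat d r" using Rc i by (auto simp: N_def)
    thus "R i * (cc i \<cdot>\<^sub>m CC (Suc i) N) \<in> carrier_mat d r" using Gc[OF i] by (rule mult_carrier_mat)
  qed
  have RG2: "\<And>i. i \<in> {1..Suc k} \<Longrightarrow> R (Suc i) * (cc i \<cdot>\<^sub>m CC (Suc i) N) \<in> carrier_mat d r"
  proof -
    fix i assume i: "i \<in> {1..Suc k}"
    have "R (Suc i) \<in> carrier_mat d r" using Rc i by (auto simp: N_def)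
    thus "R (Suc i) * (cc i \<cdot>\<^sub>m CC (Suc i) N) \<in> carrier_mat d r" using Gc[OF i] by (rule mult_carrier_mat)
  qed
  have W1c: "W1 \<in> carrier_mat d r" unfolding W1_def by (rule lsum_carrier[OF RG1])
  have W2c: "W2 \<in> carrier_mat d r" unfolding W2_def by (rule lsum_carrier[OF RG2])
  have vMc: "vcat Mn (0\<^sub>m r r) \<in> carrier_mat (m * r) r" using Mnc unfolding m_def by (intro carrier_matI) auto
  have vMc': "vcat (0\<^sub>m r r) Mn \<in> carrier_mat (m * r) r" using Mnc unfolding m_def by (intro carrier_matI) auto
  have hU1: "hcats d R m * U1 = W1 - W2" unfolding U1_def
    by (subst mult_minus_distrib_mat[OF hmc vMc vMc']) (simp add: hW1 hW2)
  have hU2: "hcats d R m * U2 = W2 - W1" unfolding U2_def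
    by (subst mult_minus_distrib_mat[OF hmc vMc' vMc]) (simp add: hW1 hW2)
  have phi3': "hcats d R N * Ct * transpose_mat (hcats d R N) = (W1 - W2) * transpose_mat (R m) + (W2 - W1) * transpose_mat (R N)"
  proof -
    have a: "hcats d R m * U1 * transpose_mat (R m) = (W1 - W2) * transpose_mat (R m)" unfolding hU1[symmetric] ..
    have b: "hcats d R m * U2 * transpose_mat (R N) = (W2 - W1) * transpose_mat (R N)" unfolding hU2[symmetric] ..
    show ?thesis unfolding phi3 a b ..
  qed
  have partA: "(W1 - W2) * transpose_mat (R m) + (W2 - W1) * transpose_mat (R N) = (- s) \<cdot>\<^sub>m ((W1 - W2) * transpose_mat P)"
  proof -
    note cars = W1c W2c Rmc Pc
    note dims = cars[THEN carrier_matD(1)] cars[THEN carrier_matD(2)]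
    show ?thesis unfolding RN
      apply (simp only: md_simps dimL dims simp_thms transpose_transpose)
      apply (rule eq_matI)
       apply (simp_all only: idxL dimL dims)
      done
  qed
  have VNc: "V N \<in> carrier_mat d r" using Vnc unfolding Vn_def .
  have iin: "\<And>i. i \<in> {1..Suc k} \<Longrightarrow> i \<in> {1..<n}" using kn by auto
  define F where "F = (\<lambda>i. transpose_mat E * V (Suc i) * minv (Yt (Suc i)) * CC (Suc i) N)"
  have Fc: "\<And>i. i \<in> {1..Suc k} \<Longrightarrow> F i \<in> carrier_mat d r"
  proof -
    fix i assume "i \<in> {1..Suc k}"
    hence i: "i \<in> {1..<n}" by (rule iin)
    show "F i \<in> carrier_mat d r" unfolding F_def using E sf'(4)[OF i] sf'(7)[OF i] B Hi(1) VNc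
      by (meson mult_carrier_mat transpose_carrier_mat)
  qed
  have partB0: "W1 - W2 = lsum d r (\<lambda>i. R i * (cc i \<cdot>\<^sub>m CC (Suc i) N) - R (Suc i) * (cc i \<cdot>\<^sub>m CC (Suc i) N)) (Suc k)"
    unfolding W1_def W2_def by (rule lsum_minus[OF RG1 RG2])
  have partB: "W1 - W2 = lsum d r (\<lambda>i. (- (sqrt (- 2 * \<sigma> i) * cc i)) \<cdot>\<^sub>m F i) (Suc k)"
    unfolding partB0
  proof (rule lsum_cong)
    fix i assume i0: "i \<in> {1..Suc k}"
    hence i: "i \<in> {1..<n}" by (rule iin)
    have Ri: "R i \<in> carrier_mat d r" using XR i by auto
    have RS: "R (Suc i) = R i + sqrt (- 2 * \<sigma> i) \<cdot>\<^sub>m (transpose_mat E * V (Suc i) * minv (Yt (Suc i)))"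
      using R_def i by auto
    note cars = Ri sf'(4)[OF i] sf'(7)[OF i] E B Hi(1) VNc
    note dims = cars[THEN carrier_matD(1)] cars[THEN carrier_matD(2)]
    show "R i * (cc i \<cdot>\<^sub>m CC (Suc i) N) - R (Suc i) * (cc i \<cdot>\<^sub>m CC (Suc i) N) = (- (sqrt (- 2 * \<sigma> i) * cc i)) \<cdot>\<^sub>m F i"
      unfolding RS F_def
      apply (simp only: md_simps dimL dims simp_thms transpose_transpose)
      apply (rule eq_matI)
       apply (simp_all only: idxL dimL dims)
      apply (simp add: algebra_simps)
      done
  qed
  have PTc: "transpose_mat P \<in> carrier_mat r d" using Pc by simp
  define FP where "FP = (\<lambda>i. F i * transpose_mat P)"
  have FPc: "\<And>i. i \<in> {1..Suc k} \<Longrightarrow> FP i \<in> carrier_mat d d" unfolding FP_def using Fc PTc by (meson mult_carrier_mat)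
  have nFc: "\<And>i. i \<in> {1..Suc k} \<Longrightarrow> (- (sqrt (- 2 * \<sigma> i) * cc i)) \<cdot>\<^sub>m F i \<in> carrier_mat d r" using Fc by simp
  have partC: "(- s) \<cdot>\<^sub>m ((W1 - W2) * transpose_mat P) = lsum d d (\<lambda>i. (s * (sqrt (- 2 * \<sigma> i) * cc i)) \<cdot>\<^sub>m FP i) (Suc k)"
  proof -
    have "(W1 - W2) * transpose_mat P = lsum d d (\<lambda>i. (- (sqrt (- 2 * \<sigma> i) * cc i)) \<cdot>\<^sub>m F i * transpose_mat P) (Suc k)"
      unfolding partB by (rule lsum_mult_right[OF nFc PTc])
    moreover have "(- s) \<cdot>\<^sub>m lsum d d (\<lambda>i. (- (sqrt (- 2 * \<sigma> i) * cc i)) \<cdot>\<^sub>m F i * transpose_mat P) (Suc k)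
      = lsum d d (\<lambda>i. (- s) \<cdot>\<^sub>m ((- (sqrt (- 2 * \<sigma> i) * cc i)) \<cdot>\<^sub>m F i * transpose_mat P)) (Suc k)"
      by (rule lsum_smult) (use nFc PTc in \<open>meson mult_carrier_mat\<close>)
    moreover have "lsum d d (\<lambda>i. (- s) \<cdot>\<^sub>m ((- (sqrt (- 2 * \<sigma> i) * cc i)) \<cdot>\<^sub>m F i * transpose_mat P)) (Suc k)
      = lsum d d (\<lambda>i. (s * (sqrt (- 2 * \<sigma> i) * cc i)) \<cdot>\<^sub>m FP i) (Suc k)"
    proof (rule lsum_cong)
      fix i assume i: "i \<in> {1..Suc k}"
      note cars = Fc[OF i] Pc
      note dims = cars[THEN carrier_matD(1)] cars[THEN carrier_matD(2)]
      show "(- s) \<cdot>\<^sub>m ((- (sqrt (- 2 * \<sigma> i) * cc i)) \<cdot>\<^sub>m F i * transpose_mat P) = (s * (sqrt (- 2 * \<sigma> i) * cc i)) \<cdot>\<^sub>m FP i"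
        unfolding FP_def by (simp only: md_simps dimL dims simp_thms mult_minus_left mult_minus_right minus_minus)
    qed
    ultimately show ?thesis by simp
  qed
  define Dl where "Dl = (\<lambda>i. V (Suc i) * minv (Yt (Suc i)) * transpose_mat (V (Suc i)))"
  have Dlc: "\<And>i. i \<in> {1..Suc k} \<Longrightarrow> (sum g' {1..i}) \<cdot>\<^sub>m Dl i \<in> carrier_mat d d"
    unfolding Dl_def using Delta_car iin by simp
  have Xd: "X m - Xp = lsum d d (\<lambda>i. (sum g' {1..i}) \<cdot>\<^sub>m Dl i) (Suc k)"
  proof -
    have m1: "m \<in> {1..n}" using hm by auto
    have "(\<Sum>i=1..m. g' i) \<cdot>\<^sub>m X m - msum d (\<lambda>i. g' i \<cdot>\<^sub>m X i) {1..m} =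
      lsum d d (\<lambda>k. (\<Sum>j=1..k. g' j) \<cdot>\<^sub>m (V (Suc k) * minv (Yt (Suc k)) * transpose_mat (V (Suc k)))) (m-1)"
      by (rule Xdiff[OF m1])
    moreover have e: "m - 1 = Suc k" unfolding m_def by simp
    ultimately show ?thesis unfolding gs' smult_one_mat' e Xp_def Dl_def by simp
  qed
  define M0 where "M0 = B * minv H * transpose_mat B * (Vn * Dn * transpose_mat Vn) * E"
  have M0c: "M0 \<in> carrier_mat d d" unfolding M0_def using B Hi(1) Vnc Dnc E by auto
  have ETc: "transpose_mat E \<in> carrier_mat d d" using E by simp
  have Lxc: "lsum d d (\<lambda>i. (sum g' {1..i}) \<cdot>\<^sub>m Dl i) (Suc k) \<in> carrier_mat d d" by (rule lsum_carrier[OF Dlc])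
  have Zf: "Z = transpose_mat E * lsum d d (\<lambda>i. (sum g' {1..i}) \<cdot>\<^sub>m Dl i) (Suc k) * M0"
  proof -
    note cars = E B Hi(1) Vnc Dnc Lxc
    note dims = cars[THEN carrier_matD(1)] cars[THEN carrier_matD(2)]
    show ?thesis unfolding Z_def Xd M0_def by (simp only: md_simps dimL dims simp_thms)
  qed
  have partD: "\<gamma> \<cdot>\<^sub>m Z = lsum d d (\<lambda>i. (\<gamma> * sum g' {1..i}) \<cdot>\<^sub>m FP i) (Suc k)"
  proof -
    have "Z = lsum d d (\<lambda>i. transpose_mat E * ((sum g' {1..i}) \<cdot>\<^sub>m Dl i) * M0) (Suc k)"
      unfolding Zf by (rule lsum_sandwich[OF Dlc ETc M0c])
    hence "\<gamma> \<cdot>\<^sub>m Z = lsum d d (\<lambda>i. \<gamma> \<cdot>\<^sub>m (transpose_mat E * ((sum g' {1..i}) \<cdot>\<^sub>m Dl i) * M0)) (Suc k)"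
      using lsum_smult[of "Suc k" "\<lambda>i. transpose_mat E * ((sum g' {1..i}) \<cdot>\<^sub>m Dl i) * M0" d d \<gamma>] Dlc ETc M0c
      by (metis mult_carrier_mat)
    also have "\<dots> = lsum d d (\<lambda>i. (\<gamma> * sum g' {1..i}) \<cdot>\<^sub>m FP i) (Suc k)"
    proof (rule lsum_cong)
      fix i assume i0: "i \<in> {1..Suc k}"
      hence i: "i \<in> {1..<n}" by (rule iin)
      note cars = E B Hi(1) Vnc Dnc sf'(4)[OF i] sf'(7)[OF i] VNc
      note dims = cars[THEN carrier_matD(1)] cars[THEN carrier_matD(2)]
      show "\<gamma> \<cdot>\<^sub>m (transpose_mat E * ((sum g' {1..i}) \<cdot>\<^sub>m Dl i) * M0) = (\<gamma> * sum g' {1..i}) \<cdot>\<^sub>m FP i"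
        unfolding FP_def F_def Dl_def M0_def P_def Vn_def[symmetric]
        by (simp only: md_simps dimL dims simp_thms transpose_transpose Dns)
    qed
    finally show ?thesis .
  qed
  have scal: "\<And>i. i \<in> {1..Suc k} \<Longrightarrow> s * (sqrt (- 2 * \<sigma> i) * cc i) = \<gamma> * sum g' {1..i}"
  proof -
    fix i assume i0: "i \<in> {1..Suc k}"
    hence i: "i \<in> {1..<n}" by (rule iin)
    have sgi: "\<sigma> i < 0" using shifts i by auto
    have sgm: "\<sigma> m < 0" using shifts hm by auto
    have pos: "sqrt (\<sigma> i * \<sigma> m) > 0" using sgi sgm by (simp add: mult_neg_neg)
    have sp: "sqrt (- 2 * \<sigma> i) * sqrt (- 2 * \<sigma> m) = 2 * sqrt (\<sigma> i * \<sigma> m)" by (rule sqrt_prod[OF sgi sgm])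
    have gg: "sum g' {1..i} = sum g {1..i}" unfolding g'_def using i0 by (intro sum.cong) (auto simp: m_def)
    have "s * (sqrt (- 2 * \<sigma> i) * cc i) = (sqrt (- 2 * \<sigma> i) * sqrt (- 2 * \<sigma> m)) * cc i"
      unfolding s_def by (simp add: algebra_simps)
    also have "\<dots> = 2 * sqrt (\<sigma> i * \<sigma> m) * (g N * sum g {1..i} * (1 / (2 * sqrt (\<sigma> i * \<sigma> m))))"
    proof -
      have ccm: "cc i = g N * sum g {1..i} * (1 / (2 * sqrt (\<sigma> i * \<sigma> m)))" unfolding cc_def m_def ..
      show ?thesis unfolding sp ccm ..
    qed
    also have "\<dots> = g N * sum g {1..i}" using pos sgi sgm by (simp add: field_simps)
    finally show "s * (sqrt (- 2 * \<sigma> i) * cc i) = \<gamma> * sum g' {1..i}" unfolding gg \<gamma>_def .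
  qed
  have Ct_eq: "hcats d R N * Ct * transpose_mat (hcats d R N) = \<gamma> \<cdot>\<^sub>m Z"
    unfolding phi3' partA partC partD
  proof (rule lsum_cong)
    fix i assume i: "i \<in> {1..Suc k}"
    show "(s * (sqrt (- 2 * \<sigma> i) * cc i)) \<cdot>\<^sub>m FP i = (\<gamma> * sum g' {1..i}) \<cdot>\<^sub>m FP i" unfolding scal[OF i] ..
  qed
  have ba: "R m * Q11 * transpose_mat (R m) + R m * Q12 * transpose_mat (R m + s \<cdot>\<^sub>m P)
     + (R m + s \<cdot>\<^sub>m P) * Q12 * transpose_mat (R m) + (R m + s \<cdot>\<^sub>m P) * Q22 * transpose_mat (R m + s \<cdot>\<^sub>m P)
   = 0 \<cdot>\<^sub>m (R m * T * transpose_mat (R m)) + (\<gamma>*s) \<cdot>\<^sub>m (R m * T * transpose_mat P + P * T * transpose_mat (R m))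
       - (2*\<gamma>*\<sigma> m) \<cdot>\<^sub>m (P * Yn * transpose_mat P) - (2*\<gamma>*\<gamma>*\<sigma> m) \<cdot>\<^sub>m (P * (T - Yn) * transpose_mat P)"
  proof -
    have sgm: "\<sigma> m < 0" using shifts hm by auto
    have hss: "s * s = - 2 * \<sigma> m" unfolding s_def using sgm by simp
    show ?thesis unfolding Q11_def Q12_def Q22_def \<gamma>_def[symmetric] Yn_def[symmetric]
      by (rule bn_alg[OF Rmc Pc T Ync _ refl hss]) simp
  qed
  have ricc: "riccati A E B C H Xp \<in> carrier_mat d d" unfolding riccati_def using A E B C Hi(1) Xpc by auto
  have Zc: "Z \<in> carrier_mat d d" unfolding Zf using ETc Lxc M0c by auto
  have LHS: "riccati A E B C H (msum d (\<lambda>i. g i \<cdot>\<^sub>m X i) {1..N}) = riccati A E B C H Xp + (\<gamma>*s) \<cdot>\<^sub>m (R m * T * transpose_mat P + P * T * transpose_mat (R m))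
       - (2*\<gamma>*\<sigma> m) \<cdot>\<^sub>m (P * Yn * transpose_mat P)
       - (2*\<gamma>*\<gamma>*\<sigma> m) \<cdot>\<^sub>m (P * (T - Yn) * transpose_mat P)
       + \<gamma> \<cdot>\<^sub>m (Z + transpose_mat Z)" unfolding ms st ..
  have RHS: "hcats d R N * RHn r T Yt CC \<sigma> N g * transpose_mat (hcats d R N) =
     riccati A E B C H Xp + (0 \<cdot>\<^sub>m (R m * T * transpose_mat (R m)) + (\<gamma>*s) \<cdot>\<^sub>m (R m * T * transpose_mat P + P * T * transpose_mat (R m))
       - (2*\<gamma>*\<sigma> m) \<cdot>\<^sub>m (P * Yn * transpose_mat P) - (2*\<gamma>*\<gamma>*\<sigma> m) \<cdot>\<^sub>m (P * (T - Yn) * transpose_mat P))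
     + \<gamma> \<cdot>\<^sub>m Z + transpose_mat (\<gamma> \<cdot>\<^sub>m Z)"
    unfolding phi phi1 phi2 Ct_eq RN ba ..
  have fin: "riccati A E B C H (msum d (\<lambda>i. g i \<cdot>\<^sub>m X i) {1..N}) = hcats d R N * RHn r T Yt CC \<sigma> N g * transpose_mat (hcats d R N)"
  proof -
    note cars = ricc Zc Rmc Pc T Ync
    note dims = cars[THEN carrier_matD(1)] cars[THEN carrier_matD(2)]
    show ?thesis unfolding LHS RHS
      apply (simp only: md_simps dimL dims simp_thms transpose_transpose)
      apply (rule eq_matI)
       apply (simp_all only: idxL dimL dims)
      done
  qed
  show ?thesis using fin unfolding N_def .
qed


lemma main: "Suc (Suc k) \<le> n \<Longrightarrow> (\<Sum>i=1..Suc (Suc k). g i) = 1 \<Longrightarrow>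
  riccati A E B C H (msum d (\<lambda>i. g i \<cdot>\<^sub>m X i) {1..Suc (Suc k)})
     = hcats d R (Suc (Suc k)) * RHn r T Yt CC \<sigma> (Suc (Suc k)) g * transpose_mat (hcats d R (Suc (Suc k)))"
proof (induction k arbitrary: g)
  case 0
  have "g 1 + g 2 = 1" using 0(2) by (simp add: numeral_2_eq_2)
  thus ?case by (rule base)
next
  case (Suc k)
  show ?case
    by (rule stepcase[OF Suc.prems(1) Suc.prems(2)]) (rule Suc.IH, use Suc.prems(1) in auto)
qed

end

theorem theorem2:
  fixes A E B C H T :: "real mat" and d p q r n :: nat
    and X R V Yt :: "nat \<Rightarrow> real mat" and \<sigma> \<gamma> :: "nat \<Rightarrow> real"
  assumes A: "A \<in> carrier_mat d d" and E: "E \<in> carrier_mat d d"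
    and B: "B \<in> carrier_mat d p" and C: "C \<in> carrier_mat q d"
    and H: "H \<in> carrier_mat p p" and H_sym: "transpose_mat H = H"
    and H_pd: "\<forall>x \<in> carrier_vec p. x \<noteq> 0\<^sub>v p \<longrightarrow> x \<bullet> (H *\<^sub>v x) > 0"
    and T: "T \<in> carrier_mat r r" and T_sym: "transpose_mat T = T"
    and X1: "\<exists>k Z1 D1. Z1 \<in> carrier_mat d k \<and> D1 \<in> carrier_mat k k \<and> transpose_mat D1 = D1
               \<and> X 1 = Z1 * D1 * transpose_mat Z1"
    and R1: "R 1 \<in> carrier_mat d r"
    and res1: "riccati A E B C H (X 1) = R 1 * T * transpose_mat (R 1)"
    and n: "n \<ge> 2"
    and shifts: "\<forall>i\<in>{1..<n}. \<sigma> i < 0"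
    and K_inv: "\<forall>i\<in>{1..<n}. invertible_mat
                  (transpose_mat A - transpose_mat E * X i * B * minv H * transpose_mat B
                   + \<sigma> i \<cdot>\<^sub>m transpose_mat E)"
    and V_def: "\<forall>i\<in>{1..<n}. V (Suc i) = sqrt (- 2 * \<sigma> i) \<cdot>\<^sub>m
                  (minv (transpose_mat A - transpose_mat E * X i * B * minv H * transpose_mat B
                         + \<sigma> i \<cdot>\<^sub>m transpose_mat E) * R i * T)"
    and Y_def: "\<forall>i\<in>{1..<n}. Yt (Suc i) = T - (1 / (2 * \<sigma> i)) \<cdot>\<^sub>m
                  ((transpose_mat (V (Suc i)) * B) * minv H * transpose_mat (transpose_mat (V (Suc i)) * B))"
    and Y_inv: "\<forall>i\<in>{1..<n}. invertible_mat (Yt (Suc i))"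
    and X_def: "\<forall>i\<in>{1..<n}. X (Suc i) = X i + V (Suc i) * minv (Yt (Suc i)) * transpose_mat (V (Suc i))"
    and R_def: "\<forall>i\<in>{1..<n}. R (Suc i) = R i + sqrt (- 2 * \<sigma> i) \<cdot>\<^sub>m
                  (transpose_mat E * V (Suc i) * minv (Yt (Suc i)))"
    and gamma_sum: "(\<Sum>i=1..n. \<gamma> i) = 1"
  shows "(\<forall>y \<in> carrier_vec d. \<exists>z \<in> carrier_vec (n * r).
           riccati A E B C H (msum d (\<lambda>i. \<gamma> i \<cdot>\<^sub>m X i) {1..n}) *\<^sub>v y = hcats d R n *\<^sub>v z)
         \<and> riccati A E B C H (msum d (\<lambda>i. \<gamma> i \<cdot>\<^sub>m X i) {1..n})
           = hcats d R n
             * RHn r T Yt (\<lambda>i j. transpose_mat (V i) * B * minv H * transpose_mat B * V j) \<sigma> n \<gamma>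
             * transpose_mat (hcats d R n)"
  proof -
  interpret radi A E B C H T d p q r n X R V Yt \<sigma>
    using A E B C H H_sym H_pd T T_sym X1 R1 res1 n shifts K_inv V_def Y_def Y_inv X_def R_def
    by unfold_locales
  obtain k where k: "n = Suc (Suc k)" using n by (metis add_2_eq_Suc le_Suc_ex)
  have eq: "riccati A E B C H (msum d (\<lambda>i. \<gamma> i \<cdot>\<^sub>m X i) {1..n})
      = hcats d R n * RHn r T Yt (\<lambda>i j. transpose_mat (V i) * B * minv H * transpose_mat B * V j) \<sigma> n \<gamma>
        * transpose_mat (hcats d R n)"
    unfolding k by (rule main) (use gamma_sum k in auto)
  have hc: "hcats d R n \<in> carrier_mat d (n * r)" by (rule hcats_carrier) (use XR in auto)
  have RHc: "RHn r T Yt (\<lambda>i j. transpose_mat (V i) * B * minv H * transpose_mat B * V j) \<sigma> n \<gamma> \<in> carrier_mat (n * r) (n * r)"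
  proof (rule RHn_carrier[OF n T])
    fix i assume i: "i \<in> {2..n}"
    then obtain j where j: "i = Suc j" "j \<in> {1..<n}" by (cases i) auto
    show "Yt i \<in> carrier_mat r r" unfolding j using sf'(5)[OF j(2)] .
  next
    fix i j assume i: "i \<in> {2..n}" and j: "j \<in> {2..n}"
    then obtain i' j' where ij: "i = Suc i'" "i' \<in> {1..<n}" "j = Suc j'" "j' \<in> {1..<n}"
      by (cases i; cases j) auto
    show "transpose_mat (V i) * B * minv H * transpose_mat B * V j \<in> carrier_mat r r"
      unfolding ij using sf'(4)[OF ij(2)] sf'(4)[OF ij(4)] B Hi(1) by (meson mult_carrier_mat transpose_carrier_mat)
  qed
  show ?thesis
  proof (intro conjI ballI)
    fix y :: "real vec" assume y: "y \<in> carrier_vec d"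
    let ?M = "RHn r T Yt (\<lambda>i j. transpose_mat (V i) * B * minv H * transpose_mat B * V j) \<sigma> n \<gamma>"
    have "riccati A E B C H (msum d (\<lambda>i. \<gamma> i \<cdot>\<^sub>m X i) {1..n}) *\<^sub>v y = hcats d R n * (?M * transpose_mat (hcats d R n)) *\<^sub>v y"
      unfolding eq using hc RHc by (subst assoc_mult_mat[of _ d "n*r" _ "n*r" _ d]) auto
    also have "\<dots> = hcats d R n *\<^sub>v ((?M * transpose_mat (hcats d R n)) *\<^sub>v y)"
      using hc RHc y by (subst assoc_mult_mat_vec[of _ d "n*r" _ d]) auto
    finally show "\<exists>z\<in>carrier_vec (n * r). riccati A E B C H (msum d (\<lambda>i. \<gamma> i \<cdot>\<^sub>m X i) {1..n}) *\<^sub>v y = hcats d R n *\<^sub>v z"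
    proof (rule bexI[of _ "(?M * transpose_mat (hcats d R n)) *\<^sub>v y"])
      have "?M * transpose_mat (hcats d R n) \<in> carrier_mat (n * r) d"
        using RHc hc by (meson mult_carrier_mat transpose_carrier_mat)
      thus "(?M * transpose_mat (hcats d R n)) *\<^sub>v y \<in> carrier_vec (n * r)" using y by (rule mult_mat_vec_carrier)
    qed
  next
    show "riccati A E B C H (msum d (\<lambda>i. \<gamma> i \<cdot>\<^sub>m X i) {1..n})
           = hcats d R n
             * RHn r T Yt (\<lambda>i j. transpose_mat (V i) * B * minv H * transpose_mat B * V j) \<sigma> n \<gamma>
             * transpose_mat (hcats d R n)" by (rule eq)
  qed
qed

end
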